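(* In the setting where delays are available at action time, the expected regret of Skipper$(\beta,\mathrm{DEW}(\eta,\beta))$ tuned by the scheme Doubling (see context) satisfies, for every $T$ and without prior knowledge of $T$ or $D$, $$\bar{\mathcal R}_T\le 30\sqrt{\left(\frac{KTe}{2}+(1+4e)D\right)\ln K}+10e^2K\ln K+5.$$
   Context: Setting: fix integers $K\ge 2$, $T\ge 1$, $[K]=\{1,\dots,K\}$. An oblivious adversary fixes in advance losses $\ell_t^a\in[0,1]$ and nonnegative integer delays $d_t$. In each round $t$ the delay $d_t$ is revealed to the learner at the beginning of the round (delay available at action time); the learner then picks (possibly at random) $A_t\in[K]$, suffers $\ell_t^{A_t}$, and at the end of round $t$ observes the pairs $(s,\ell_s^{A_s})$ for all $s\le t$ with $s+d_s=t$. Expected regret: $\bar{\mathcal R}_T=\mathbb E[\sum_{t=1}^T\ell_t^{A_t}]-\min_a\sum_{t=1}^T\ell_t^a$. $D=\sum_{t=1}^Td_t$. Algorithm DEW with inputs $\eta>0$ and $d_{\max}$: $\eta'=\min\{\eta,(4e\,d_{\max})^{-1}\}$, $w_0^a=1$; in round $t$ play $A_t\sim p_t$ with $p_t^a=w_{t-1}^a/\sum_b w_{t-1}^b$; at the end of the round, for each received pair $(s,\ell_s^{A_s})$ form $\hat\ell_s^a=\ell_s^a\mathbb 1(a=A_s)/p_s^a$ and update $w_t^a=w_{t-1}^a\exp(-\eta'\sum_s\hat\ell_s^a)$ (sum over pairs received in round $t$). Skipper$(\beta,\mathcal A)$ plays the actions of the base algorithm $\mathcal A$ and forwards to $\mathcal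 A$ only the pairs $(s,\ell_s^{A_s})$ with $d_s<\beta$. Skipper$(\beta,\mathrm{DEW}(\eta,\beta))$ uses DEW with learning rate $\eta$ and $d_{\max}=\beta$. Doubling: rounds are partitioned into consecutive epochs indexed by $m$, with $\omega_m=2^m$, $\beta_m=\sqrt{\omega_m}/(4e\ln K)$ and $\eta_m=1/(4e\beta_m)$; in each epoch a fresh copy of Skipper$(\beta_m,\mathrm{DEW}(\eta_m,\beta_m))$ is run. For epoch $m$ let $\sigma(m)$ be its number of rounds, $S^m_\beta$ the set of its rounds with $d_t\ge\beta$, and $D^m_\beta$ the sum of $d_t$ over its rounds with $d_t<\beta$. At the beginning of each round $t$, after $d_t$ is revealed, the algorithm stays in the current epoch $m$ if, with round $t$ included in epoch $m$, $$\max\Big\{|S^m_{\beta_m}|^2,\ \Big(\tfrac{eK\sigma(m)}{2}+D^m_{\beta_m}\Big)\ln K\Big\}\le\omega_m;$$ otherwise a new epoch (with a larger index) is started at round $t$, before $A_t$ is selected. *)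

theory Defs
  imports Complex_Main
begin

text \<open>Rounds are indexed 1, 2, ...; actions are 1..K.  A history hs is a list of
  actions with hs ! (s - 1) the action played in round s.
  Losses: l t a; delays: d t.\<close>

definition beta :: "nat \<Rightarrow> nat \<Rightarrow> real" where
  "beta K m = sqrt (2 ^ m) / (4 * exp 1 * ln (real K))"

definition eta :: "nat \<Rightarrow> nat \<Rightarrow> real" where
  "eta K m = 1 / (4 * exp 1 * beta K m)"

text \<open>Doubling condition: epoch m consisting of rounds r..t.\<close>
definition epoch_ok :: "nat \<Rightarrow> (nat \<Rightarrow> nat) \<Rightarrow> nat \<Rightarrow> nat \<Rightarrow> nat \<Rightarrow> bool" where
  "epoch_ok K d m r t \<longleftrightarrow>
     max ((real (card {s \<in> {r..t}. real (d s) \<ge> beta K m}))\<^sup>2)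
         ((exp 1 * real K * real (t - r + 1) / 2
            + real (\<Sum>s \<in> {s \<in> {r..t}. real (d s) < beta K m}. d s)) * ln (real K))
     \<le> 2 ^ m"

text \<open>epoch K d t = (m, r): index m and first round r of the epoch containing round t
  (t \<ge> 1).  epoch K d 0 = (0, 1) is the initial (empty) epoch.\<close>
primrec epoch :: "nat \<Rightarrow> (nat \<Rightarrow> nat) \<Rightarrow> nat \<Rightarrow> nat \<times> nat" where
  "epoch K d 0 = (0, 1)"
| "epoch K d (Suc t) =
     (let (m, r) = epoch K d t in
      if epoch_ok K d m r (Suc t) then (m, r)
      else (LEAST m'. m < m' \<and> epoch_ok K d m' (Suc t) (Suc t), Suc t))"

text \<open>Probability p_t^a of DEW (inside Skipper, fresh copy per epoch) at round t,
  given history hs and the table Q s b = p_s^b of earlier rounds.\<close>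
definition dew_prob ::
  "nat \<Rightarrow> (nat \<Rightarrow> nat \<Rightarrow> real) \<Rightarrow> (nat \<Rightarrow> nat) \<Rightarrow> nat list \<Rightarrow> (nat \<Rightarrow> nat \<Rightarrow> real)
    \<Rightarrow> nat \<Rightarrow> nat \<Rightarrow> real" where
  "dew_prob K l d hs Q t a =
     (let (m, r) = epoch K d t;
          \<eta>' = min (eta K m) (1 / (4 * exp 1 * beta K m));
          recv = {s \<in> {r..<t}. s + d s < t \<and> real (d s) < beta K m};
          w = (\<lambda>b. exp (- \<eta>' * (\<Sum>s\<in>recv. if b = hs ! (s - 1) then l s b / Q s b else 0)))
      in w a / (\<Sum>b\<in>{1..K}. w b))"

primrec probs ::
  "nat \<Rightarrow> (nat \<Rightarrow> nat \<Rightarrow> real) \<Rightarrow> (nat \<Rightarrow> nat) \<Rightarrow> nat list \<Rightarrow> nat \<Rightarrow> nat \<Rightarrow> nat \<Rightarrow> real" where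
  "probs K l d hs 0 = (\<lambda>s a. 0)"
| "probs K l d hs (Suc n) =
     (probs K l d hs n)(Suc n := dew_prob K l d hs (probs K l d hs n) (Suc n))"

definition hist_prob :: "nat \<Rightarrow> (nat \<Rightarrow> nat \<Rightarrow> real) \<Rightarrow> (nat \<Rightarrow> nat) \<Rightarrow> nat list \<Rightarrow> real" where
  "hist_prob K l d hs = (\<Prod>t\<in>{1..length hs}. probs K l d hs (length hs) t (hs ! (t - 1)))"

definition expected_regret :: "nat \<Rightarrow> nat \<Rightarrow> (nat \<Rightarrow> nat \<Rightarrow> real) \<Rightarrow> (nat \<Rightarrow> nat) \<Rightarrow> real" where
  "expected_regret K T l d =
     (\<Sum>hs\<in>{hs. length hs = T \<and> set hs \<subseteq> {1..K}}.
        hist_prob K l d hs * (\<Sum>t=1..T. l t (hs ! (t - 1))))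
     - Min ((\<lambda>a. \<Sum>t=1..T. l t a) ` {1..K})"

end

theory Submission
  imports Defs
begin


lemma ln2_ge: "ln (2::real) \<ge> 1/2"
proof -
  have "ln (1/2::real) \<le> 1/2 - 1" by (rule ln_le_minus_one) auto
  thus ?thesis by (simp add: ln_div)
qed

lemma exp1_gt2: "exp (1::real) > 2"
  using exp_1_gt_powr[of 1] by simp

lemma exp1_ge2: "exp (1::real) \<ge> 2"
  using exp1_gt2 by simp

lemma lnK_ge: "K \<ge> 2 \<Longrightarrow> ln (real K) \<ge> 1/2"
proof -
  assume "K \<ge> 2"
  hence "ln 2 \<le> ln (real K)" by (intro ln_mono) auto
  thus ?thesis using ln2_ge by linarith
qed

lemma epoch_ok_single_ex:
  assumes "K \<ge> 2"
  shows "\<exists>m'. m < m' \<and> epoch_ok K d m' t t"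
proof -
  define c where "c = (exp 1 * real K / 2 + real (d t)) * ln (real K)"
  obtain n::nat where n: "c < real n" using reals_Archimedean2 by blast
  define m' where "m' = Suc (max m n)"
  have "real n < 2 ^ n" by (rule of_nat_less_two_power)
  also have "(2::real) ^ n \<le> 2 ^ m'" by (intro power_increasing) (auto simp: m'_def)
  finally have c2: "c \<le> 2 ^ m'" using n by linarith
  have card1: "card {s \<in> {t..t}. real (d s) \<ge> beta K m'} \<le> 1"
    by (rule order_trans[OF card_mono[of "{t}"]]) auto
  have "(real (card {s \<in> {t..t}. real (d s) \<ge> beta K m'}))\<^sup>2 \<le> 1"
    using card1 by (simp add: power_le_one)
  also have "1 \<le> (2::real) ^ m'" by simp
  finally have A: "(real (card {s \<in> {t..t}. real (d s) \<ge> beta K m'}))\<^sup>2 \<le> 2 ^ m'" .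
  have sumle: "real (\<Sum>s \<in> {s \<in> {t..t}. real (d s) < beta K m'}. d s) \<le> real (d t)"
  proof -
    have "{s \<in> {t..t}. real (d s) < beta K m'} = (if real (d t) < beta K m' then {t} else {})" by auto
    thus ?thesis by simp
  qed
  have lnpos: "ln (real K) \<ge> 0" using assms by simp
  have "(exp 1 * real K * real (t - t + 1) / 2
            + real (\<Sum>s \<in> {s \<in> {t..t}. real (d s) < beta K m'}. d s)) * ln (real K) \<le> c"
    unfolding c_def using sumle lnpos by (intro mult_right_mono) auto
  with c2 A show ?thesis unfolding epoch_ok_def by (intro exI[of _ m']) (auto simp: m'_def)
qed

lemma epoch_Suc_cases:
  assumes "K \<ge> 2"
  shows "epoch K d (Suc t) = epoch K d t \<and> epoch_ok K d (fst (epoch K d t)) (snd (epoch K d t)) (Suc t)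
    \<or> (fst (epoch K d t) < fst (epoch K d (Suc t)) \<and> snd (epoch K d (Suc t)) = Suc t
        \<and> epoch_ok K d (fst (epoch K d (Suc t))) (Suc t) (Suc t)
        \<and> \<not> epoch_ok K d (fst (epoch K d t)) (snd (epoch K d t)) (Suc t)
        \<and> fst (epoch K d (Suc t)) = (LEAST m'. fst (epoch K d t) < m' \<and> epoch_ok K d m' (Suc t) (Suc t)))"
proof -
  obtain m r where mr: "epoch K d t = (m, r)" by fastforce
  show ?thesis
  proof (cases "epoch_ok K d m r (Suc t)")
    case True thus ?thesis using mr by simp
  next
    case False
    let ?P = "\<lambda>m'. m < m' \<and> epoch_ok K d m' (Suc t) (Suc t)"
    have ex: "\<exists>m'. ?P m'" using epoch_ok_single_ex[OF assms] .
    have "?P (LEAST m'. ?P m')" by (rule LeastI_ex[OF ex])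
    thus ?thesis using mr False by simp
  qed
qed

lemma epoch_snd_ge1: "snd (epoch K d t) \<ge> 1"
  by (induction t) (auto simp: Let_def split: prod.splits)

lemma epoch_snd_le: "t \<ge> 1 \<Longrightarrow> snd (epoch K d t) \<le> t"
proof (induction t)
  case 0 thus ?case by simp
next
  case (Suc t)
  thus ?case by (cases "t = 0") (auto simp: Let_def split: prod.splits)
qed

lemma epoch_fst_mono_Suc: "K \<ge> 2 \<Longrightarrow> fst (epoch K d t) \<le> fst (epoch K d (Suc t))"
  using epoch_Suc_cases[of K d t] by auto

lemma epoch_fst_mono: assumes "K \<ge> 2" "t \<le> t'" shows "fst (epoch K d t) \<le> fst (epoch K d t')"
  using assms(2)
proof (induction t' rule: dec_induct)
  case base thus ?case by simp
next
  case (step n) thus ?case using epoch_fst_mono_Suc[OF assms(1), of d n] by simp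
qed

lemma epoch_ok_cur: "K \<ge> 2 \<Longrightarrow> t \<ge> 1 \<Longrightarrow> epoch_ok K d (fst (epoch K d t)) (snd (epoch K d t)) t"
proof (induction t)
  case 0 thus ?case by simp
next
  case (Suc t)
  show ?case using epoch_Suc_cases[OF Suc.prems(1), of d t] by auto
qed

lemma not_ok0: assumes "K \<ge> 2" "r \<le> t" shows "\<not> epoch_ok K d 0 r t"
proof
  assume h: "epoch_ok K d 0 r t"
  have lnK: "ln (real K) \<ge> 1/2" using lnK_ge[OF assms(1)] .
  have y: "real K * real (t - r + 1) \<ge> 2 * 1"
    using assms by (intro mult_mono) auto
  have "exp 1 * (real K * real (t - r + 1)) \<ge> exp 1 * 2"
    using y by (intro mult_left_mono) auto
  moreover have "exp 1 * 2 > (4::real)" using exp1_gt2 by simp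
  ultimately have "exp 1 * (real K * real (t - r + 1)) > 4" by linarith
  hence a: "exp 1 * real K * real (t - r + 1) / 2 > 2" by (simp add: mult.assoc)
  have "(exp 1 * real K * real (t - r + 1) / 2
            + real (\<Sum>s \<in> {s \<in> {r..t}. real (d s) < beta K 0}. d s)) * ln (real K)
        \<ge> (exp 1 * real K * real (t - r + 1) / 2) * (1/2)"
    using lnK a by (intro mult_mono) (auto intro!: sum_nonneg add_nonneg_nonneg)
  moreover have "(exp 1 * real K * real (t - r + 1) / 2) * (1/2) > 1" using a by simp
  ultimately show False using h unfolding epoch_ok_def by simp
qed

lemma epoch_const: "K \<ge> 2 \<Longrightarrow> t \<ge> 1 \<Longrightarrow> snd (epoch K d t) \<le> u \<Longrightarrow> u \<le> t \<Longrightarrow> epoch K d u = epoch K d t"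
proof (induction t arbitrary: u)
  case 0 thus ?case by simp
next
  case (Suc t)
  from epoch_Suc_cases[OF Suc.prems(1), of d t] show ?case
  proof (elim disjE conjE)
    assume h: "epoch K d (Suc t) = epoch K d t" "epoch_ok K d (fst (epoch K d t)) (snd (epoch K d t)) (Suc t)"
    show ?thesis
    proof (cases "u = Suc t")
      case True thus ?thesis by simp
    next
      case False
      have t1: "t \<ge> 1" using h Suc.prems epoch_snd_ge1[of K d "Suc t"] False by (cases t) auto
      thus ?thesis using Suc.IH[of u] Suc.prems h False by auto
    qed
  next
    assume "snd (epoch K d (Suc t)) = Suc t"
    thus ?thesis using Suc.prems by auto
  qed
qed

lemma epoch_start_prev: "K \<ge> 2 \<Longrightarrow> t \<ge> 1 \<Longrightarrow>
   fst (epoch K d (snd (epoch K d t) - 1)) < fst (epoch K d t)"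
proof (induction t)
  case 0 thus ?case by simp
next
  case (Suc t)
  from epoch_Suc_cases[OF Suc.prems(1), of d t] show ?case
  proof (elim disjE conjE)
    assume h: "epoch K d (Suc t) = epoch K d t" "epoch_ok K d (fst (epoch K d t)) (snd (epoch K d t)) (Suc t)"
    show ?thesis
    proof (cases "t = 0")
      case True thus ?thesis using h not_ok0[OF Suc.prems(1), of 1 1 d] by simp
    next
      case False thus ?thesis using Suc h by auto
    qed
  next
    assume "fst (epoch K d t) < fst (epoch K d (Suc t))" "snd (epoch K d (Suc t)) = Suc t"
    thus ?thesis by auto
  qed
qed


context fixes K :: nat and l :: "nat \<Rightarrow> nat \<Rightarrow> real" and d :: "nat \<Rightarrow> nat"
begin

definition pr :: "nat list \<Rightarrow> nat \<Rightarrow> nat \<Rightarrow> real" where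
  "pr hs t = probs K l d hs t t"

lemma probs_eq: "probs K l d hs n t = (if 1 \<le> t \<and> t \<le> n then pr hs t else (\<lambda>a. 0))"
proof (induction n)
  case 0 thus ?case by auto
next
  case (Suc n)
  show ?case
  proof (cases "t = Suc n")
    case True thus ?thesis by (simp add: pr_def)
  next
    case False thus ?thesis using Suc by auto
  qed
qed

lemma pr_Suc: "pr hs (Suc n) = dew_prob K l d hs (probs K l d hs n) (Suc n)"
  by (simp add: pr_def)

lemma dew_prob_cong:
  assumes "\<And>s. 1 \<le> s \<Longrightarrow> s < t \<Longrightarrow> s + d s < t \<Longrightarrow> hs ! (s - 1) = hs' ! (s - 1) \<and> Q s = Q' s"
  shows "dew_prob K l d hs Q t = dew_prob K l d hs' Q' t"
proof -
  obtain m r where mr: "epoch K d t = (m, r)" by fastforce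
  have r1: "r \<ge> 1" using epoch_snd_ge1[of K d t] mr by simp
  let ?recv = "{s \<in> {r..<t}. s + d s < t \<and> real (d s) < beta K m}"
  have eq: "\<And>b. (\<Sum>s\<in>?recv. if b = hs ! (s - 1) then l s b / Q s b else 0)
      = (\<Sum>s\<in>?recv. if b = hs' ! (s - 1) then l s b / Q' s b else 0)"
    by (rule sum.cong) (use assms r1 in auto)
  show ?thesis unfolding dew_prob_def mr using eq by simp
qed

lemma pr_cong:
  "(\<And>s. 1 \<le> s \<Longrightarrow> s < t \<Longrightarrow> s + d s < t \<Longrightarrow> hs ! (s - 1) = hs' ! (s - 1)) \<Longrightarrow> pr hs t = pr hs' t"
proof (induction t rule: less_induct)
  case (less t)
  show ?case
  proof (cases t)
    case 0 thus ?thesis by (simp add: pr_def)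
  next
    case (Suc n)
    have "dew_prob K l d hs (probs K l d hs n) (Suc n) = dew_prob K l d hs' (probs K l d hs' n) (Suc n)"
    proof (rule dew_prob_cong)
      fix s assume s: "1 \<le> s" "s < Suc n" "s + d s < Suc n"
      have "pr hs s = pr hs' s"
        by (rule less.IH) (use s less.prems Suc in auto)
      thus "hs ! (s - 1) = hs' ! (s - 1) \<and> probs K l d hs n s = probs K l d hs' n s"
        using s less.prems Suc by (auto simp: probs_eq)
    qed
    thus ?thesis using Suc by (simp add: pr_Suc)
  qed
qed

lemma dew_prob_pos_sum:
  assumes "K \<ge> 1"
  shows "dew_prob K l d hs Q t a > 0" "(\<Sum>a\<in>{1..K}. dew_prob K l d hs Q t a) = 1"
proof -
  obtain m r where mr: "epoch K d t = (m, r)" by fastforce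
  define w where "w = (\<lambda>b. exp (- min (eta K m) (1 / (4 * exp 1 * beta K m)) *
     (\<Sum>s\<in>{s \<in> {r..<t}. s + d s < t \<and> real (d s) < beta K m}. if b = hs ! (s - 1) then l s b / Q s b else 0)))"
  have dp: "\<And>a. dew_prob K l d hs Q t a = w a / (\<Sum>b\<in>{1..K}. w b)"
    unfolding dew_prob_def mr w_def by (simp add: Let_def)
  have wpos: "\<And>b. w b > 0" unfolding w_def by simp
  have spos: "(\<Sum>b\<in>{1..K}. w b) > 0" using assms wpos by (intro sum_pos) auto
  show "dew_prob K l d hs Q t a > 0" using dp wpos spos by simp
  show "(\<Sum>a\<in>{1..K}. dew_prob K l d hs Q t a) = 1" using spos by (simp add: dp sum_divide_distrib[symmetric])
qed

lemma pr_pos: "K \<ge> 1 \<Longrightarrow> t \<ge> 1 \<Longrightarrow> pr hs t a > 0"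
  by (cases t) (auto simp: pr_Suc dew_prob_pos_sum)

lemma pr_sum: assumes "K \<ge> 1" "t \<ge> 1" shows "(\<Sum>a\<in>{1..K}. pr hs t a) = 1"
proof -
  obtain n where n: "t = Suc n" using assms(2) by (cases t) auto
  show ?thesis unfolding n pr_Suc using dew_prob_pos_sum(2)[OF assms(1)] by blast
qed

lemma hist_prob_eq: "hist_prob K l d hs = (\<Prod>t\<in>{1..length hs}. pr hs t (hs ! (t - 1)))"
  unfolding hist_prob_def by (intro prod.cong) (auto simp: probs_eq)

definition H :: "nat \<Rightarrow> nat list set" where
  "H n = {hs. length hs = n \<and> set hs \<subseteq> {1..K}}"

definition E :: "nat \<Rightarrow> (nat list \<Rightarrow> real) \<Rightarrow> real" where
  "E n f = (\<Sum>hs\<in>H n. hist_prob K l d hs * f hs)"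

lemma finite_H: "finite (H n)"
proof -
  have "H n = {xs. set xs \<subseteq> {1..K} \<and> length xs = n}" unfolding H_def by auto
  thus ?thesis using finite_lists_length_eq[of "{1..K}" n] by simp
qed

lemma hist_prob_nonneg: "K \<ge> 1 \<Longrightarrow> hist_prob K l d hs \<ge> 0"
  unfolding hist_prob_eq by (intro prod_nonneg) (auto intro!: less_imp_le[OF pr_pos])

lemma hist_prob_snoc: "hist_prob K l d (xs @ [b]) = hist_prob K l d xs * pr xs (Suc (length xs)) b"
proof -
  have pc: "\<And>t. t \<le> Suc (length xs) \<Longrightarrow> pr (xs @ [b]) t = pr xs t"
    by (rule pr_cong) (auto simp: nth_append)
  have "hist_prob K l d (xs @ [b]) = (\<Prod>t\<in>{1..Suc (length xs)}. pr (xs @ [b]) t ((xs @ [b]) ! (t - 1)))"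
    by (simp add: hist_prob_eq)
  also have "... = (\<Prod>t\<in>{1..Suc (length xs)}. pr xs t ((xs @ [b]) ! (t - 1)))"
    by (intro prod.cong) (auto simp: pc)
  also have "... = (\<Prod>t\<in>{1..length xs}. pr xs t ((xs @ [b]) ! (t - 1))) * pr xs (Suc (length xs)) b"
    by (simp add: nth_append)
  also have "(\<Prod>t\<in>{1..length xs}. pr xs t ((xs @ [b]) ! (t - 1))) = hist_prob K l d xs"
    unfolding hist_prob_eq by (intro prod.cong) (auto simp: nth_append)
  finally show ?thesis .
qed

lemma sum_H_Suc: "(\<Sum>hs\<in>H (Suc n). f hs) = (\<Sum>xs\<in>H n. \<Sum>b\<in>{1..K}. f (xs @ [b]))"
proof -
  have "(\<Sum>xs\<in>H n. \<Sum>b\<in>{1..K}. f (xs @ [b])) = (\<Sum>p\<in>H n \<times> {1..K}. f (fst p @ [snd p]))"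
    by (subst sum.cartesian_product) (simp add: case_prod_beta)
  also have "... = (\<Sum>hs\<in>H (Suc n). f hs)"
  proof (rule sum.reindex_bij_witness[of _ "\<lambda>hs. (butlast hs, last hs)" "\<lambda>p. fst p @ [snd p]"])
    fix p assume "p \<in> H n \<times> {1..K}"
    thus "(butlast (fst p @ [snd p]), last (fst p @ [snd p])) = p" by auto
  next
    fix p assume "p \<in> H n \<times> {1..K}"
    thus "fst p @ [snd p] \<in> H (Suc n)" by (auto simp: H_def)
  next
    fix hs assume h: "hs \<in> H (Suc n)"
    hence "hs \<noteq> []" by (auto simp: H_def)
    thus "fst (butlast hs, last hs) @ [snd (butlast hs, last hs)] = hs" by simp
  next
    fix hs assume h: "hs \<in> H (Suc n)"
    hence ne: "hs \<noteq> []" and len: "length hs = Suc n" and st: "set hs \<subseteq> {1..K}" by (auto simp: H_def)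
    have "set (butlast hs) \<subseteq> {1..K}" using st by (meson in_set_butlastD subset_iff)
    moreover have "last hs \<in> {1..K}" using st ne last_in_set[OF ne] by blast
    ultimately show "(butlast hs, last hs) \<in> H n \<times> {1..K}" using len by (auto simp: H_def)
  qed simp
  finally show ?thesis by simp
qed

lemma E_Suc_trunc:
  assumes "K \<ge> 1" "n \<le> N"
  shows "E (Suc N) (\<lambda>hs. f (take n hs)) = E N (\<lambda>hs. f (take n hs))"
proof -
  have "E (Suc N) (\<lambda>hs. f (take n hs)) =
      (\<Sum>xs\<in>H N. \<Sum>b\<in>{1..K}. hist_prob K l d xs * pr xs (Suc (length xs)) b * f (take n (xs @ [b])))"
    unfolding E_def sum_H_Suc hist_prob_snoc ..
  also have "... = (\<Sum>xs\<in>H N. hist_prob K l d xs * f (take n xs) * (\<Sum>b\<in>{1..K}. pr xs (Suc (length xs)) b))"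
  proof (intro sum.cong refl)
    fix xs assume "xs \<in> H N"
    hence "length xs = N" by (simp add: H_def)
    hence "\<And>b. take n (xs @ [b]) = take n xs" using assms by simp
    thus "(\<Sum>b\<in>{1..K}. hist_prob K l d xs * pr xs (Suc (length xs)) b * f (take n (xs @ [b]))) =
       hist_prob K l d xs * f (take n xs) * (\<Sum>b\<in>{1..K}. pr xs (Suc (length xs)) b)"
      by (simp add: sum_distrib_left mult_ac)
  qed
  also have "... = E N (\<lambda>hs. f (take n hs))"
    unfolding E_def using pr_sum[OF assms(1)] by simp
  finally show ?thesis .
qed

lemma E_trunc:
  assumes "K \<ge> 1" "n \<le> N"
  shows "E N (\<lambda>hs. f (take n hs)) = E n f"
  using assms(2)
proof (induction N rule: dec_induct)
  case base
  show ?case unfolding E_def by (intro sum.cong) (auto simp: H_def)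
next
  case (step N)
  thus ?case using E_Suc_trunc[OF assms(1), of n N f] by simp
qed

lemma E_trunc':
  assumes "K \<ge> 1" "n \<le> N" "\<And>hs. hs \<in> H N \<Longrightarrow> F hs = f (take n hs)"
  shows "E N F = E n f"
proof -
  have "E N F = E N (\<lambda>hs. f (take n hs))" unfolding E_def using assms(3) by (intro sum.cong) auto
  thus ?thesis using E_trunc[OF assms(1,2)] by simp
qed

lemma E_const: assumes "K \<ge> 1" shows "E N (\<lambda>hs. c) = c"
proof -
  have "E N (\<lambda>hs. c) = E 0 (\<lambda>hs. c)" using E_trunc[OF assms, of 0 N "\<lambda>hs. c"] by simp
  also have "H 0 = {[]}" by (auto simp: H_def)
  hence "E 0 (\<lambda>hs. c) = c" by (simp add: E_def hist_prob_def)
  finally show ?thesis .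
qed

lemma E_add: "E n (\<lambda>hs. f hs + g hs) = E n f + E n g"
  unfolding E_def by (simp add: distrib_left sum.distrib)

lemma E_diff: "E n (\<lambda>hs. f hs - g hs) = E n f - E n g"
  unfolding E_def by (simp add: right_diff_distrib sum_subtractf)

lemma E_cmult: "E n (\<lambda>hs. c * f hs) = c * E n f"
  unfolding E_def by (simp add: sum_distrib_left mult_ac)

lemma E_sum: "E n (\<lambda>hs. \<Sum>i\<in>I. f i hs) = (\<Sum>i\<in>I. E n (f i))"
  unfolding E_def by (simp add: sum_distrib_left sum.swap[of _ I])

lemma E_mono: "K \<ge> 1 \<Longrightarrow> (\<And>hs. hs \<in> H n \<Longrightarrow> f hs \<le> g hs) \<Longrightarrow> E n f \<le> E n g"
  unfolding E_def by (intro sum_mono mult_left_mono) (auto intro: hist_prob_nonneg)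

lemma E_cong: "(\<And>hs. hs \<in> H n \<Longrightarrow> f hs = g hs) \<Longrightarrow> E n f = E n g"
  unfolding E_def by (intro sum.cong) auto

end


context fixes K :: nat and l :: "nat \<Rightarrow> nat \<Rightarrow> real" and d :: "nat \<Rightarrow> nat"
begin

lemma sum_H_split:
  assumes "1 \<le> s" "s \<le> n" "K \<ge> 1"
  shows "(\<Sum>hs\<in>H K n. f hs) = (\<Sum>hs\<in>{hs\<in>H K n. hs ! (s - 1) = 1}. \<Sum>b\<in>{1..K}. f (hs[s - 1 := b]))"
proof -
  let ?H1 = "{hs\<in>H K n. hs ! (s - 1) = 1}"
  have "(\<Sum>hs\<in>?H1. \<Sum>b\<in>{1..K}. f (hs[s - 1 := b])) = (\<Sum>p\<in>?H1 \<times> {1..K}. f ((fst p)[s - 1 := snd p]))"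
    by (subst sum.cartesian_product) (simp add: case_prod_beta)
  also have "... = (\<Sum>hs\<in>H K n. f hs)"
  proof (rule sum.reindex_bij_witness[of _ "\<lambda>hs. (hs[s - 1 := 1], hs ! (s - 1))" "\<lambda>p. (fst p)[s - 1 := snd p]"])
    fix p assume p: "p \<in> ?H1 \<times> {1..K}"
    obtain hs b where pe: "p = (hs, b)" by fastforce
    have len: "length hs = n" and h1: "hs ! (s - 1) = 1" using p pe by (auto simp: H_def)
    have lt: "s - 1 < length hs" using assms len by simp
    show "(((fst p)[s - 1 := snd p])[s - 1 := 1], ((fst p)[s - 1 := snd p]) ! (s - 1)) = p"
    proof -
      have "hs[s - 1 := 1] = hs" by (metis list_update_id h1)
      thus ?thesis using pe lt by simp
    qed
    have "set (hs[s - 1 := b]) \<subseteq> insert b (set hs)" by (rule set_update_subset_insert)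
    thus "(fst p)[s - 1 := snd p] \<in> H K n" using p pe by (auto simp: H_def)
  next
    fix hs assume h: "hs \<in> H K n"
    have lt: "s - 1 < length hs" using assms h by (simp add: H_def)
    show "(fst (hs[s - 1 := 1], hs ! (s - 1)))[s - 1 := snd (hs[s - 1 := 1], hs ! (s - 1))] = hs"
      using lt by simp
    have "set (hs[s - 1 := 1]) \<subseteq> insert 1 (set hs)" by (rule set_update_subset_insert)
    moreover have "hs ! (s - 1) \<in> {1..K}" using h nth_mem[OF lt] unfolding H_def by blast
    moreover have "1 \<in> {1..K}" using assms by simp
    ultimately show "(hs[s - 1 := 1], hs ! (s - 1)) \<in> ?H1 \<times> {1..K}"
      using h lt by (auto simp: H_def)
  qed simp
  finally show ?thesis by simp
qed

lemma H_update: "hs \<in> H K n \<Longrightarrow> b \<in> {1..K} \<Longrightarrow> hs[i := b] \<in> H K n"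
proof -
  assume h: "hs \<in> H K n" "b \<in> {1..K}"
  have "set (hs[i := b]) \<subseteq> insert b (set hs)" by (rule set_update_subset_insert)
  thus ?thesis using h by (auto simp: H_def)
qed

lemma hist_prob_update:
  assumes "hs \<in> H K n" "1 \<le> s" "s \<le> n" "n \<le> s + d s"
  shows "hist_prob K l d (hs[s - 1 := b]) = pr K l d hs s b * (\<Prod>t\<in>{1..n} - {s}. pr K l d hs t (hs ! (t - 1)))"
proof -
  have len: "length hs = n" using assms by (simp add: H_def)
  have lt: "s - 1 < length hs" using assms len by simp
  have pc: "\<And>t. t \<le> n \<Longrightarrow> pr K l d (hs[s - 1 := b]) t = pr K l d hs t"
  proof (rule pr_cong)
    fix t s' assume "t \<le> n" "1 \<le> s'" "s' < t" "s' + d s' < t"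
    hence "s' \<noteq> s" using assms by auto
    hence "s' - 1 \<noteq> s - 1" using \<open>1 \<le> s'\<close> assms by auto
    thus "hs[s - 1 := b] ! (s' - 1) = hs ! (s' - 1)" by simp
  qed
  have "hist_prob K l d (hs[s - 1 := b]) = (\<Prod>t\<in>{1..n}. pr K l d (hs[s - 1 := b]) t (hs[s - 1 := b] ! (t - 1)))"
    by (simp add: hist_prob_eq len)
  also have "... = (\<Prod>t\<in>{1..n}. pr K l d hs t (hs[s - 1 := b] ! (t - 1)))"
  proof (rule prod.cong[OF refl])
    fix t assume t: "t \<in> {1..n}"
    show "pr K l d (hs[s - 1 := b]) t (hs[s - 1 := b] ! (t - 1)) = pr K l d hs t (hs[s - 1 := b] ! (t - 1))"
      using pc[of t] t by simp
  qed
  also have "... = pr K l d hs s (hs[s - 1 := b] ! (s - 1)) * (\<Prod>t\<in>{1..n} - {s}. pr K l d hs t (hs[s - 1 := b] ! (t - 1)))"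
    using assms by (intro prod.remove) auto
  also have "(\<Prod>t\<in>{1..n} - {s}. pr K l d hs t (hs[s - 1 := b] ! (t - 1))) = (\<Prod>t\<in>{1..n} - {s}. pr K l d hs t (hs ! (t - 1)))"
  proof (intro prod.cong refl)
    fix t assume "t \<in> {1..n} - {s}"
    hence "t - 1 \<noteq> s - 1" using assms by auto
    thus "pr K l d hs t (hs[s - 1 := b] ! (t - 1)) = pr K l d hs t (hs ! (t - 1))" by simp
  qed
  finally show ?thesis using lt by simp
qed

lemma indep:
  assumes K1: "K \<ge> 1" and s: "1 \<le> s" "s \<le> n" "n \<le> s + d s" and a: "a \<in> {1..K}"
    and G: "\<And>hs b. hs \<in> H K n \<Longrightarrow> b \<in> {1..K} \<Longrightarrow> G (hs[s - 1 := b]) = G hs"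
  shows "E K l d n (\<lambda>hs. if hs ! (s - 1) = a then G hs / pr K l d hs s a else 0) = E K l d n G"
proof -
  let ?H1 = "{hs\<in>H K n. hs ! (s - 1) = 1}"
  define R where "R hs = (\<Prod>t\<in>{1..n} - {s}. pr K l d hs t (hs ! (t - 1)))" for hs
  have pcs: "\<And>hs b. pr K l d (hs[s - 1 := b]) s = pr K l d hs s"
  proof (rule pr_cong)
    fix hs b s' assume "1 \<le> s'" "s' < s" "s' + d s' < s"
    thus "hs[s - 1 := b] ! (s' - 1) = hs ! (s' - 1)" by simp
  qed
  have lenH: "\<And>hs. hs \<in> H K n \<Longrightarrow> s - 1 < length hs" using s by (simp add: H_def)
  have L: "E K l d n (\<lambda>hs. if hs ! (s - 1) = a then G hs / pr K l d hs s a else 0) = (\<Sum>hs\<in>?H1. R hs * G hs)"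
  proof -
    have "E K l d n (\<lambda>hs. if hs ! (s - 1) = a then G hs / pr K l d hs s a else 0) =
      (\<Sum>hs\<in>?H1. \<Sum>b\<in>{1..K}. pr K l d hs s b * R hs * (if b = a then G hs / pr K l d hs s a else 0))"
      unfolding E_def
    proof (subst sum_H_split[OF s(1,2) K1], intro sum.cong refl)
      fix hs b assume hs: "hs \<in> ?H1" and b: "b \<in> {1..K}"
      have hH: "hs \<in> H K n" using hs by simp
      have nb: "hs[s - 1 := b] ! (s - 1) = b" using lenH[OF hH] by simp
      show "hist_prob K l d (hs[s - 1 := b]) *
         (if hs[s - 1 := b] ! (s - 1) = a then G (hs[s - 1 := b]) / pr K l d (hs[s - 1 := b]) s a else 0)
        = pr K l d hs s b * R hs * (if b = a then G hs / pr K l d hs s a else 0)"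
        unfolding hist_prob_update[OF hH s] nb pcs G[OF hH b] R_def ..
    qed
    also have "... = (\<Sum>hs\<in>?H1. R hs * G hs)"
    proof (intro sum.cong refl)
      fix hs assume "hs \<in> ?H1"
      have p: "pr K l d hs s a > 0" using pr_pos K1 s by auto
      have "(\<Sum>b\<in>{1..K}. pr K l d hs s b * R hs * (if b = a then G hs / pr K l d hs s a else 0))
          = pr K l d hs s a * R hs * (G hs / pr K l d hs s a)"
        using a by (simp add: if_distrib[of "\<lambda>x. _ * x"] sum.delta cong: if_cong)
      also have "... = R hs * G hs" using p by simp
      finally show "(\<Sum>b\<in>{1..K}. pr K l d hs s b * R hs * (if b = a then G hs / pr K l d hs s a else 0)) = R hs * G hs" .
    qed
    finally show ?thesis .
  qed
  have Rr: "E K l d n G = (\<Sum>hs\<in>?H1. R hs * G hs)"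
  proof -
    have "E K l d n G = (\<Sum>hs\<in>?H1. \<Sum>b\<in>{1..K}. pr K l d hs s b * R hs * G hs)"
      unfolding E_def
    proof (subst sum_H_split[OF s(1,2) K1], intro sum.cong refl)
      fix hs b assume hs: "hs \<in> ?H1" and b: "b \<in> {1..K}"
      have hH: "hs \<in> H K n" using hs by simp
      show "hist_prob K l d (hs[s - 1 := b]) * G (hs[s - 1 := b]) = pr K l d hs s b * R hs * G hs"
        unfolding hist_prob_update[OF hH s] G[OF hH b] R_def ..
    qed
    also have "... = (\<Sum>hs\<in>?H1. R hs * G hs)"
      using pr_sum[OF K1 s(1)] by (intro sum.cong refl) (simp add: sum_distrib_right[symmetric])
    finally show ?thesis .
  qed
  show ?thesis using L Rr by simp
qed

end


lemma exp_minus_quad: fixes x::real assumes "x \<ge> 0" shows "exp (-x) \<le> 1 - x + x^2/2"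
proof -
  have a: "1 + x + x^2/2 \<le> exp x" using exp_lower_Taylor_quadratic[OF assms] by simp
  have p: "1 + x + x^2/2 > 0" using assms by (simp add: add_pos_nonneg)
  have "exp (-x) = 1 / exp x" by (simp add: exp_minus field_simps)
  also have "... \<le> 1 / (1 + x + x^2/2)" using a p by (intro divide_left_mono) auto
  also have "... \<le> 1 - x + x^2/2"
  proof -
    have "(1 - x + x^2/2) * (1 + x + x^2/2) = 1 + x^4/4" by (simp add: algebra_simps power2_eq_square power4_eq_xxxx)
    moreover have "x^4/4 \<ge> 0" by simp
    ultimately have "(1 - x + x^2/2) * (1 + x + x^2/2) \<ge> 1" by linarith
    thus ?thesis using p by (simp add: divide_le_eq)
  qed
  finally show ?thesis .
qed

locale ep =
  fixes K :: nat and l :: "nat \<Rightarrow> nat \<Rightarrow> real" and d :: "nat \<Rightarrow> nat" and T m r e :: nat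
  assumes K2: "K \<ge> 2" and lb: "\<And>t a. t \<in> {1..T} \<Longrightarrow> a \<in> {1..K} \<Longrightarrow> 0 \<le> l t a \<and> l t a \<le> 1"
    and r1: "1 \<le> r" and re: "r \<le> e" and eT: "e \<le> T"
    and epc: "\<And>u. u \<in> {r..e} \<Longrightarrow> epoch K d u = (m, r)"
    and ok: "epoch_ok K d m r e"
begin

definition kept :: "nat \<Rightarrow> bool" where "kept s \<longleftrightarrow> real (d s) < beta K m"
definition recvs :: "nat \<Rightarrow> nat set" where "recvs t = {s \<in> {r..<t}. s + d s < t \<and> kept s}"
definition arr :: "nat \<Rightarrow> nat set" where "arr u = {s \<in> {r..u}. s + d s = u \<and> kept s}"
definition lh :: "nat list \<Rightarrow> nat \<Rightarrow> nat \<Rightarrow> real" where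
  "lh hs s b = (if b = hs ! (s - 1) then l s b / pr K l d hs s b else 0)"
definition wt :: "nat list \<Rightarrow> nat \<Rightarrow> nat \<Rightarrow> real" where
  "wt hs t b = exp (- eta K m * (\<Sum>s\<in>recvs t. lh hs s b))"
definition W :: "nat list \<Rightarrow> nat \<Rightarrow> real" where "W hs t = (\<Sum>b\<in>{1..K}. wt hs t b)"
definition X :: "nat list \<Rightarrow> nat \<Rightarrow> nat \<Rightarrow> real" where "X hs u b = (\<Sum>s\<in>arr u. lh hs s b)"
definition PX :: "nat list \<Rightarrow> nat \<Rightarrow> real" where "PX hs u = (\<Sum>b\<in>{1..K}. pr K l d hs u b * X hs u b)"
definition PX2 :: "nat list \<Rightarrow> nat \<Rightarrow> real" where "PX2 hs u = (\<Sum>b\<in>{1..K}. pr K l d hs u b * (X hs u b)^2)"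

lemma K1: "K \<ge> 1" using K2 by simp
lemma lnK_pos: "ln (real K) > 0" using K2 by simp
lemma beta_pos: "beta K m > 0" unfolding beta_def using lnK_pos by simp
lemma eta_pos: "eta K m > 0" unfolding eta_def using beta_pos by simp
lemma eta_eq: "eta K m = ln (real K) / sqrt (2 ^ m)"
  unfolding eta_def beta_def by simp

lemma finite_recvs: "finite (recvs t)" unfolding recvs_def by simp
lemma finite_arr: "finite (arr u)" unfolding arr_def by simp

lemma pr_formula: assumes "u \<in> {r..e}" shows "pr K l d hs u b = wt hs u b / W hs u"
proof -
  obtain n where n: "u = Suc n" using assms r1 by (cases u) auto
  have e: "epoch K d (Suc n) = (m, r)" using epc[OF assms] n by simp
  have mn: "min (eta K m) (1 / (4 * exp 1 * beta K m)) = eta K m" by (simp add: eta_def)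
  have recv: "{s \<in> {r..<Suc n}. s + d s < Suc n \<and> real (d s) < beta K m} = recvs u"
    unfolding recvs_def kept_def n ..
  have sc: "\<And>b. (\<Sum>s\<in>recvs u. if b = hs ! (s - 1) then l s b / probs K l d hs n s b else 0) = (\<Sum>s\<in>recvs u. lh hs s b)"
    by (intro sum.cong refl) (use r1 in \<open>auto simp: lh_def probs_eq recvs_def n\<close>)
  define w where "w b = exp (- min (eta K m) (1 / (4 * exp 1 * beta K m)) *
     (\<Sum>s\<in>{s \<in> {r..<Suc n}. s + d s < Suc n \<and> real (d s) < beta K m}. if b = hs ! (s - 1) then l s b / probs K l d hs n s b else 0))" for b
  have dp: "dew_prob K l d hs (probs K l d hs n) (Suc n) b = w b / (\<Sum>b\<in>{1..K}. w b)"
    unfolding dew_prob_def e w_def by (simp add: Let_def)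
  have ww: "w = wt hs u"
  proof
    fix b show "w b = wt hs u b" unfolding w_def wt_def mn recv using sc[of b] n by simp
  qed
  show ?thesis unfolding n pr_Suc dp ww W_def n ..
qed

lemma recvs_Suc: "r \<le> u \<Longrightarrow> recvs (Suc u) = recvs u \<union> arr u"
  unfolding recvs_def arr_def by auto

lemma recvs_arr_disj: "recvs u \<inter> arr u = {}"
  unfolding recvs_def arr_def by auto

lemma recvs_r: "recvs r = {}" unfolding recvs_def by auto

lemma wt_Suc: "r \<le> u \<Longrightarrow> wt hs (Suc u) b = wt hs u b * exp (- eta K m * X hs u b)"
  unfolding wt_def X_def recvs_Suc
  by (simp add: sum.union_disjoint finite_recvs finite_arr recvs_arr_disj distrib_left exp_add[symmetric])

lemma wt_pos: "wt hs t b > 0" unfolding wt_def by simp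
lemma W_pos: "W hs t > 0" unfolding W_def using K1 wt_pos by (intro sum_pos) auto
lemma W_r: "W hs r = real K" unfolding W_def wt_def recvs_r by simp

lemma lh_nonneg: assumes "hs \<in> H K T" "s \<in> {1..T}" shows "0 \<le> lh hs s b"
proof -
  have "s - 1 < length hs" using assms by (auto simp: H_def)
  hence "hs ! (s - 1) \<in> {1..K}" using assms nth_mem unfolding H_def by blast
  moreover have "pr K l d hs s (hs ! (s - 1)) > 0" by (rule pr_pos) (use K1 assms in auto)
  ultimately show ?thesis using assms lb[of s "hs ! (s - 1)"] unfolding lh_def by auto
qed

lemma arr_sub: "u \<le> e \<Longrightarrow> arr u \<subseteq> {r..e}" unfolding arr_def by auto
lemma recvs_sub: "t \<le> Suc e \<Longrightarrow> recvs t \<subseteq> {r..e}" unfolding recvs_def by auto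
lemma rT: "s \<in> {r..e} \<Longrightarrow> s \<in> {1..T}" using r1 eT by auto

lemma X_nonneg: "hs \<in> H K T \<Longrightarrow> u \<le> e \<Longrightarrow> 0 \<le> X hs u b"
  unfolding X_def using arr_sub lh_nonneg rT by (intro sum_nonneg) blast

lemma lh_dot: assumes "hs \<in> H K T" "s \<in> {1..T}"
  shows "(\<Sum>b\<in>{1..K}. f b * lh hs s b) = f (hs ! (s - 1)) * l s (hs ! (s - 1)) / pr K l d hs s (hs ! (s - 1))"
proof -
  have "s - 1 < length hs" using assms by (auto simp: H_def)
  hence "hs ! (s - 1) \<in> {1..K}" using assms nth_mem unfolding H_def by blast
  thus ?thesis unfolding lh_def by (simp add: if_distrib[of "\<lambda>x. f _ * x"] sum.delta' cong: if_cong)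
qed

lemma W_step: assumes "hs \<in> H K T" "u \<in> {r..e}"
  shows "W hs (Suc u) \<le> W hs u * (1 - eta K m * PX hs u + (eta K m)^2 / 2 * PX2 hs u)"
proof -
  have "W hs (Suc u) = (\<Sum>b\<in>{1..K}. wt hs u b * exp (- (eta K m * X hs u b)))"
    unfolding W_def using assms by (simp add: wt_Suc)
  also have "... \<le> (\<Sum>b\<in>{1..K}. wt hs u b * (1 - eta K m * X hs u b + (eta K m * X hs u b)^2/2))"
  proof (intro sum_mono mult_left_mono)
    fix b show "exp (- (eta K m * X hs u b)) \<le> 1 - eta K m * X hs u b + (eta K m * X hs u b)^2/2"
      using X_nonneg[OF assms(1)] assms eta_pos by (intro exp_minus_quad) auto
  qed (simp add: less_imp_le[OF wt_pos])
  also have "... = (\<Sum>b\<in>{1..K}. W hs u * pr K l d hs u b * (1 - eta K m * X hs u b + (eta K m * X hs u b)^2/2))"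
  proof (intro sum.cong refl)
    fix b
    have Wne: "W hs u \<noteq> 0" using W_pos[of hs u] by simp
    show "wt hs u b * (1 - eta K m * X hs u b + (eta K m * X hs u b)^2/2) =
       W hs u * pr K l d hs u b * (1 - eta K m * X hs u b + (eta K m * X hs u b)^2/2)"
      using Wne by (simp add: pr_formula[OF assms(2)])
  qed
  also have "... = W hs u * (1 - eta K m * PX hs u + (eta K m)^2 / 2 * PX2 hs u)"
    unfolding PX_def PX2_def using pr_sum[OF K1, where hs=hs and t=u and l=l and d=d] assms(2) r1
    by (simp add: algebra_simps sum.distrib sum_subtractf sum_distrib_left sum_divide_distrib power_mult_distrib
         sum_distrib_right[symmetric])
  finally show ?thesis .
qed

lemma pot: assumes hs: "hs \<in> H K T" and a: "a \<in> {1..K}"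
  shows "(\<Sum>u\<in>{r..e}. PX hs u) \<le> ln (real K) / eta K m + (\<Sum>s\<in>recvs (Suc e). lh hs s a)
           + eta K m / 2 * (\<Sum>u\<in>{r..e}. PX2 hs u)"
proof -
  let ?\<eta> = "eta K m"
  have step: "ln (W hs (Suc u)) - ln (W hs u) \<le> - ?\<eta> * PX hs u + ?\<eta>^2/2 * PX2 hs u" if u: "u \<in> {r..e}" for u
  proof -
    let ?y = "1 - ?\<eta> * PX hs u + ?\<eta>^2 / 2 * PX2 hs u"
    have W1: "W hs (Suc u) \<le> W hs u * ?y" using W_step[OF hs u] .
    have y: "?y > 0"
    proof (rule ccontr)
      assume "\<not> ?y > 0"
      hence "W hs u * ?y \<le> 0" using W_pos[of hs u] by (simp add: mult_nonneg_nonpos)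
      thus False using W1 W_pos[of hs "Suc u"] by linarith
    qed
    have "ln (W hs (Suc u)) \<le> ln (W hs u * ?y)" using W1 W_pos[of hs "Suc u"] by simp
    also have "... = ln (W hs u) + ln ?y" using W_pos[of hs u] y by (simp add: ln_mult)
    also have "ln ?y \<le> ?y - 1" using y by (rule ln_le_minus_one)
    finally show ?thesis by simp
  qed
  have "ln (W hs (Suc e)) - ln (W hs r) = (\<Sum>u\<in>{r..e}. ln (W hs (Suc u)) - ln (W hs u))"
    using re by (intro sum_Suc_diff[symmetric]) simp
  also have "... \<le> (\<Sum>u\<in>{r..e}. - ?\<eta> * PX hs u + ?\<eta>^2/2 * PX2 hs u)"
    by (rule sum_mono) (rule step)
  also have "... = - ?\<eta> * (\<Sum>u\<in>{r..e}. PX hs u) + ?\<eta>^2/2 * (\<Sum>u\<in>{r..e}. PX2 hs u)"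
    by (simp add: sum.distrib[symmetric] sum_distrib_left)
  finally have A: "ln (W hs (Suc e)) - ln (real K) \<le> - ?\<eta> * (\<Sum>u\<in>{r..e}. PX hs u) + ?\<eta>^2/2 * (\<Sum>u\<in>{r..e}. PX2 hs u)"
    by (simp add: W_r)
  have "wt hs (Suc e) a \<le> W hs (Suc e)"
    unfolding W_def using a by (intro member_le_sum) (auto intro: less_imp_le[OF wt_pos])
  hence "ln (wt hs (Suc e) a) \<le> ln (W hs (Suc e))" using wt_pos[of hs "Suc e" a] by (subst ln_le_cancel_iff) auto
  hence B: "- ?\<eta> * (\<Sum>s\<in>recvs (Suc e). lh hs s a) \<le> ln (W hs (Suc e))" by (simp add: wt_def)
  from A B have "?\<eta> * (\<Sum>u\<in>{r..e}. PX hs u) \<le> ln (real K) + ?\<eta> * (\<Sum>s\<in>recvs (Suc e). lh hs s a) + ?\<eta>^2/2 * (\<Sum>u\<in>{r..e}. PX2 hs u)"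
    by linarith
  also have "... = ?\<eta> * (ln (real K) / ?\<eta> + (\<Sum>s\<in>recvs (Suc e). lh hs s a) + ?\<eta> / 2 * (\<Sum>u\<in>{r..e}. PX2 hs u))"
    using eta_pos by (simp add: field_simps power2_eq_square)
  finally show ?thesis using eta_pos by (simp add: mult_le_cancel_left_pos)
qed

end


context ep begin

definition cc :: nat where "cc = nat \<lceil>beta K m\<rceil>"

lemma kept_iff: "kept s \<longleftrightarrow> d s < cc"
proof -
  have "kept s \<longleftrightarrow> int (d s) < \<lceil>beta K m\<rceil>" unfolding kept_def by (simp add: less_ceiling_iff)
  also have "... \<longleftrightarrow> d s < cc" unfolding cc_def using beta_pos by linarith
  finally show ?thesis .
qed

lemma cc_lt: "real cc - 1 < beta K m"
proof -
  have "real cc = of_int \<lceil>beta K m\<rceil>" unfolding cc_def using beta_pos by simp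
  thus ?thesis using ceiling_correct[of "beta K m"] by simp
qed

lemma wt_mono: assumes hs: "hs \<in> H K T" and "r \<le> u" "u \<le> v" "v \<le> Suc e"
  shows "wt hs v b \<le> wt hs u b"
  using assms(3,4)
proof (induction v rule: dec_induct)
  case base show ?case by simp
next
  case (step v)
  have "wt hs (Suc v) b = wt hs v b * exp (- eta K m * X hs v b)" using assms(2) step by (simp add: wt_Suc)
  also have "... \<le> wt hs v b * 1"
    using X_nonneg[OF hs, of v b] step eta_pos
    by (intro mult_left_mono) (auto intro: less_imp_le[OF wt_pos])
  finally show ?case using step by simp
qed

lemma W_mono_Suc: assumes hs: "hs \<in> H K T" and "r \<le> v" "v \<le> e" shows "W hs (Suc v) \<le> W hs v"
  unfolding W_def using wt_mono[OF hs, of v "Suc v"] assms by (intro sum_mono) auto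

lemma W_lower: assumes hs: "hs \<in> H K T" and u: "u \<in> {r..e}"
  shows "W hs u * (1 - eta K m * PX hs u) \<le> W hs (Suc u)"
proof -
  have "W hs u * (1 - eta K m * PX hs u) = (\<Sum>b\<in>{1..K}. wt hs u b * (1 - eta K m * X hs u b))"
  proof -
    have Wne: "W hs u \<noteq> 0" using W_pos[of hs u] by simp
    have "(\<Sum>b\<in>{1..K}. wt hs u b * (1 - eta K m * X hs u b)) = (\<Sum>b\<in>{1..K}. W hs u * pr K l d hs u b * (1 - eta K m * X hs u b))"
      using Wne by (intro sum.cong refl) (simp add: pr_formula[OF u])
    also have "... = W hs u * (1 - eta K m * PX hs u)"
      unfolding PX_def using pr_sum[OF K1, where hs=hs and t=u and l=l and d=d] u r1
      by (simp add: algebra_simps sum_subtractf sum_distrib_left sum_distrib_right[symmetric])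
    finally show ?thesis by simp
  qed
  also have "... \<le> (\<Sum>b\<in>{1..K}. wt hs u b * exp (- (eta K m * X hs u b)))"
    by (intro sum_mono mult_left_mono) (auto intro: less_imp_le[OF wt_pos] simp: exp_ge_add_one_self[of "- _", simplified])
  also have "... = W hs (Suc u)" unfolding W_def using u by (simp add: wt_Suc)
  finally show ?thesis .
qed

lemma PX_eq: assumes hs: "hs \<in> H K T" and u: "u \<le> e"
  shows "PX hs u = (\<Sum>s\<in>arr u. pr K l d hs u (hs ! (s - 1)) * l s (hs ! (s - 1)) / pr K l d hs s (hs ! (s - 1)))"
proof -
  have "PX hs u = (\<Sum>s\<in>arr u. \<Sum>b\<in>{1..K}. pr K l d hs u b * lh hs s b)"
    unfolding PX_def X_def by (simp add: sum_distrib_left) (rule sum.swap)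
  also have "... = (\<Sum>s\<in>arr u. pr K l d hs u (hs ! (s - 1)) * l s (hs ! (s - 1)) / pr K l d hs s (hs ! (s - 1)))"
    using arr_sub[OF u] rT by (intro sum.cong refl lh_dot[OF hs]) blast
  finally show ?thesis .
qed

lemma arr_disj: "u \<noteq> v \<Longrightarrow> arr u \<inter> arr v = {}" unfolding arr_def by auto

lemma count_window: assumes s: "s \<in> {r..e}" "kept s" and t: "t \<le> s + d s"
  shows "(\<Sum>u\<in>{s..<t}. card (arr u)) \<le> 2 * (cc - 1)"
proof -
  have "(\<Sum>u\<in>{s..<t}. card (arr u)) = card (\<Union>u\<in>{s..<t}. arr u)"
    by (rule card_UN_disjoint[symmetric]) (auto simp: finite_arr arr_disj)
  also have "... \<le> card {s..<s + 2 * (cc - 1)}"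
  proof (rule card_inj_on_le[of "\<lambda>x. x + (cc - 1)"])
    show "inj_on (\<lambda>x. x + (cc - 1)) (\<Union>u\<in>{s..<t}. arr u)" by (auto simp: inj_on_def)
    have dsc: "d s < cc" using s kept_iff by simp
    show "(\<lambda>x. x + (cc - 1)) ` (\<Union>u\<in>{s..<t}. arr u) \<subseteq> {s..<s + 2 * (cc - 1)}"
    proof
      fix y assume "y \<in> (\<lambda>x. x + (cc - 1)) ` (\<Union>u\<in>{s..<t}. arr u)"
      then obtain x u where xu: "u \<in> {s..<t}" "x \<in> arr u" "y = x + (cc - 1)" by auto
      have "d x < cc" using xu kept_iff unfolding arr_def by auto
      moreover have "x + d x = u" "x \<le> u" using xu unfolding arr_def by auto
      ultimately show "y \<in> {s..<s + 2 * (cc - 1)}" using xu t dsc by auto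
    qed
  qed simp
  finally show ?thesis by simp
qed

lemma count_real: "2 * eta K m * real (2 * (cc - 1)) \<le> 1/2"
proof -
  have c1: "real (cc - 1) \<le> beta K m"
  proof (cases "cc \<ge> 1")
    case True thus ?thesis using cc_lt by (simp add: of_nat_diff)
  next
    case False thus ?thesis using beta_pos by simp
  qed
  have "2 * eta K m * real (2 * (cc - 1)) = real (cc - 1) / (exp 1 * beta K m)"
    unfolding eta_def using beta_pos by (simp add: field_simps)
  also have "... \<le> beta K m / (exp 1 * beta K m)"
    using c1 beta_pos by (intro divide_right_mono) auto
  also have "... = 1 / exp 1" using beta_pos by simp
  also have "... \<le> 1/2" using exp1_ge2 by (simp add: field_simps)
  finally show ?thesis .
qed

lemma ratio: assumes hs: "hs \<in> H K T"
  shows "t \<in> {r..e} \<Longrightarrow> s \<in> {r..t} \<Longrightarrow> kept s \<Longrightarrow> t \<le> s + d s \<Longrightarrow> b \<in> {1..K}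
     \<Longrightarrow> pr K l d hs t b \<le> 2 * pr K l d hs s b"
proof (induction t arbitrary: s b rule: less_induct)
  case (less t)
  have ppos: "\<And>t' b'. t' \<ge> 1 \<Longrightarrow> pr K l d hs t' b' > 0" using pr_pos[OF K1] by blast
  show ?case
  proof (cases "s = t")
    case True thus ?thesis using ppos[of t b] less.prems r1 by simp
  next
    case False
    hence st: "s < t" using less.prems by simp
    have sre: "s \<in> {r..e}" using less.prems by auto
    have PXb: "PX hs u \<le> 2 * real (card (arr u))" if u: "u \<in> {s..<t}" for u
    proof -
      have ue: "u \<le> e" using u less.prems by auto
      have "PX hs u = (\<Sum>s'\<in>arr u. pr K l d hs u (hs ! (s' - 1)) * l s' (hs ! (s' - 1)) / pr K l d hs s' (hs ! (s' - 1)))"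
        by (rule PX_eq[OF hs ue])
      also have "... \<le> (\<Sum>s'\<in>arr u. 2)"
      proof (rule sum_mono)
        fix s' assume s': "s' \<in> arr u"
        have s'1: "s' \<in> {r..e}" using arr_sub[OF ue] s' by auto
        hence lt: "s' - 1 < length hs" using hs r1 eT by (auto simp: H_def)
        hence A: "hs ! (s' - 1) \<in> {1..K}" using hs nth_mem unfolding H_def by blast
        have rat: "pr K l d hs u (hs ! (s' - 1)) \<le> 2 * pr K l d hs s' (hs ! (s' - 1))"
          using s' u less.prems A by (intro less.IH) (auto simp: arr_def)
        have p': "pr K l d hs s' (hs ! (s' - 1)) > 0" using ppos s'1 r1 by auto
        have lA: "0 \<le> l s' (hs ! (s' - 1))" "l s' (hs ! (s' - 1)) \<le> 1" using lb[OF rT[OF s'1] A] by auto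
        have "pr K l d hs u (hs ! (s' - 1)) * l s' (hs ! (s' - 1)) \<le> 2 * pr K l d hs s' (hs ! (s' - 1)) * 1"
          using rat lA ppos[of u] p' u sre r1 by (intro mult_mono) (auto intro: less_imp_le)
        thus "pr K l d hs u (hs ! (s' - 1)) * l s' (hs ! (s' - 1)) / pr K l d hs s' (hs ! (s' - 1)) \<le> 2"
          using p' by (simp add: divide_le_eq)
      qed
      finally show ?thesis by simp
    qed
    have tot: "2 * eta K m * real (\<Sum>u\<in>{s..<t}. card (arr u)) \<le> 1/2"
    proof -
      have "(\<Sum>u\<in>{s..<t}. card (arr u)) \<le> 2 * (cc - 1)"
        using count_window[OF sre less.prems(3)] less.prems by simp
      hence "real (\<Sum>u\<in>{s..<t}. card (arr u)) \<le> real (2 * (cc - 1))" by (simp only: of_nat_le_iff)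
      hence "2 * eta K m * real (\<Sum>u\<in>{s..<t}. card (arr u)) \<le> 2 * eta K m * real (2 * (cc - 1))"
        using eta_pos by (intro mult_left_mono) auto
      thus ?thesis using count_real by linarith
    qed
    have Wl: "v \<le> t \<Longrightarrow> W hs v \<ge> (1 - 2 * eta K m * real (\<Sum>u\<in>{s..<v}. card (arr u))) * W hs s" if "s \<le> v" for v
      using that
    proof (induction v rule: dec_induct)
      case base thus ?case by simp
    next
      case (step v)
      have vt: "v < t" using step by simp
      have vr: "v \<in> {r..e}" using step less.prems sre by auto
      let ?a = "2 * eta K m * real (\<Sum>u\<in>{s..<v}. card (arr u))"
      let ?c = "2 * eta K m * real (card (arr v))"
      have anonneg: "?a \<ge> 0" "?c \<ge> 0" using eta_pos by (auto intro!: mult_nonneg_nonneg sum_nonneg)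
      have sumsplit: "(\<Sum>u\<in>{s..<Suc v}. card (arr u)) = (\<Sum>u\<in>{s..<v}. card (arr u)) + card (arr v)"
        using step by simp
      have ac: "?a + ?c \<le> 1/2"
      proof -
        have "(\<Sum>u\<in>{s..<Suc v}. card (arr u)) \<le> (\<Sum>u\<in>{s..<t}. card (arr u))"
          using vt by (intro sum_mono2) auto
        hence "real (\<Sum>u\<in>{s..<Suc v}. card (arr u)) \<le> real (\<Sum>u\<in>{s..<t}. card (arr u))" by (simp only: of_nat_le_iff)
        hence "2 * eta K m * real (\<Sum>u\<in>{s..<Suc v}. card (arr u)) \<le> 2 * eta K m * real (\<Sum>u\<in>{s..<t}. card (arr u))"
          using eta_pos by (intro mult_left_mono) auto
        thus ?thesis using tot sumsplit by (simp add: distrib_left)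
      qed
      have "W hs (Suc v) \<ge> W hs v * (1 - eta K m * PX hs v)" by (rule W_lower[OF hs vr])
      moreover have "W hs v * (1 - eta K m * PX hs v) \<ge> W hs v * (1 - ?c)"
        using PXb[of v] step W_pos[of hs v] eta_pos by (intro mult_left_mono) auto
      moreover have "W hs v * (1 - ?c) \<ge> (1 - ?a) * W hs s * (1 - ?c)"
        using step.IH vt ac anonneg by (intro mult_right_mono) auto
      moreover have "(1 - ?a) * W hs s * (1 - ?c) \<ge> (1 - (?a + ?c)) * W hs s"
      proof -
        have e1: "(1 - ?a) * (1 - ?c) = 1 - (?a + ?c) + ?a * ?c" by (simp add: algebra_simps)
        have "?a * ?c \<ge> 0" using anonneg by (rule mult_nonneg_nonneg)
        hence "(1 - ?a) * (1 - ?c) \<ge> 1 - (?a + ?c)" using e1 by linarith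
        thus ?thesis using W_pos[of hs s] by (simp add: mult.commute mult.left_commute mult_right_mono)
      qed
      ultimately show ?case using sumsplit by (simp add: distrib_left)
    qed
    have Wt: "W hs t \<ge> W hs s / 2"
    proof -
      have "W hs t \<ge> (1 - 2 * eta K m * real (\<Sum>u\<in>{s..<t}. card (arr u))) * W hs s"
        using Wl[of t] st by simp
      moreover have "(1 - 2 * eta K m * real (\<Sum>u\<in>{s..<t}. card (arr u))) * W hs s \<ge> (1/2) * W hs s"
        using tot W_pos[of hs s] by (intro mult_right_mono) auto
      ultimately show ?thesis by simp
    qed
    have "pr K l d hs t b = wt hs t b / W hs t" using less.prems by (simp add: pr_formula)
    also have "... \<le> wt hs s b / (W hs s / 2)"
    proof (rule frac_le)
      show "0 \<le> wt hs s b" using wt_pos by (rule less_imp_le)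
      show "wt hs t b \<le> wt hs s b" using less.prems by (intro wt_mono[OF hs]) auto
      show "0 < W hs s / 2" using W_pos by simp
      show "W hs s / 2 \<le> W hs t" by (rule Wt)
    qed
    also have "... = 2 * pr K l d hs s b" using sre by (simp add: pr_formula)
    finally show ?thesis .
  qed
qed

lemma drift_step: assumes hs: "hs \<in> H K T" and v: "v \<in> {r..e}" "Suc v \<le> e" and s': "s' \<in> {1..T}"
  shows "(\<Sum>b\<in>{1..K}. pr K l d hs v b * l s' b) - (\<Sum>b\<in>{1..K}. pr K l d hs (Suc v) b * l s' b) \<le> eta K m * PX hs v"
proof -
  have v1: "Suc v \<in> {r..e}" using v by auto
  have each: "(pr K l d hs v b - pr K l d hs (Suc v) b) * l s' b \<le> eta K m * (pr K l d hs v b * X hs v b)"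
    if b: "b \<in> {1..K}" for b
  proof -
    have Wv: "W hs (Suc v) \<le> W hs v" using W_mono_Suc[OF hs] v by auto
    have "pr K l d hs (Suc v) b = wt hs v b * exp (- eta K m * X hs v b) / W hs (Suc v)"
      using pr_formula[OF v1] v by (simp add: wt_Suc)
    also have "... \<ge> wt hs v b * exp (- eta K m * X hs v b) / W hs v"
      using Wv W_pos[of hs "Suc v"] wt_pos[of hs v b] by (intro divide_left_mono) auto
    moreover have "wt hs v b * exp (- eta K m * X hs v b) / W hs v \<ge> wt hs v b * (1 - eta K m * X hs v b) / W hs v"
      using wt_pos[of hs v b] W_pos[of hs v] exp_ge_add_one_self[of "- eta K m * X hs v b"]
      by (intro divide_right_mono mult_left_mono) auto
    ultimately have "pr K l d hs (Suc v) b \<ge> pr K l d hs v b * (1 - eta K m * X hs v b)"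
      using pr_formula[OF v(1)] by simp
    hence D: "pr K l d hs v b - pr K l d hs (Suc v) b \<le> eta K m * (pr K l d hs v b * X hs v b)"
      by (simp add: algebra_simps)
    have B: "eta K m * (pr K l d hs v b * X hs v b) \<ge> 0"
      using eta_pos pr_pos[OF K1, where hs=hs and t=v and a=b and l=l and d=d] X_nonneg[OF hs, of v b] v r1
      by (auto intro!: mult_nonneg_nonneg)
    have L: "0 \<le> l s' b" "l s' b \<le> 1" using lb[OF s' b] by auto
    show ?thesis
    proof (cases "pr K l d hs v b - pr K l d hs (Suc v) b \<ge> 0")
      case True
      hence "(pr K l d hs v b - pr K l d hs (Suc v) b) * l s' b \<le> (pr K l d hs v b - pr K l d hs (Suc v) b) * 1"
        using L by (intro mult_left_mono) auto
      thus ?thesis using D by simp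
    next
      case False
      hence "(pr K l d hs v b - pr K l d hs (Suc v) b) * l s' b \<le> 0"
        using L by (simp add: mult_nonpos_nonneg)
      thus ?thesis using B by linarith
    qed
  qed
  have "(\<Sum>b\<in>{1..K}. pr K l d hs v b * l s' b) - (\<Sum>b\<in>{1..K}. pr K l d hs (Suc v) b * l s' b)
      = (\<Sum>b\<in>{1..K}. (pr K l d hs v b - pr K l d hs (Suc v) b) * l s' b)"
    by (simp add: sum_subtractf left_diff_distrib)
  also have "... \<le> (\<Sum>b\<in>{1..K}. eta K m * (pr K l d hs v b * X hs v b))"
    by (rule sum_mono) (rule each)
  also have "... = eta K m * PX hs v" unfolding PX_def by (simp add: sum_distrib_left)
  finally show ?thesis .
qed

lemma drift: assumes hs: "hs \<in> H K T" and s: "s \<in> {r..e}" and u: "s \<le> u" "u \<le> e" and s': "s' \<in> {1..T}"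
  shows "(\<Sum>b\<in>{1..K}. pr K l d hs s b * l s' b) - (\<Sum>b\<in>{1..K}. pr K l d hs u b * l s' b)
     \<le> eta K m * (\<Sum>v\<in>{s..<u}. PX hs v)"
  using u
proof (induction u rule: dec_induct)
  case base thus ?case by simp
next
  case (step u)
  have "(\<Sum>b\<in>{1..K}. pr K l d hs u b * l s' b) - (\<Sum>b\<in>{1..K}. pr K l d hs (Suc u) b * l s' b) \<le> eta K m * PX hs u"
    using step s by (intro drift_step[OF hs _ _ s']) auto
  thus ?case using step by (simp add: distrib_left)
qed

end


lemma pr_take: "u \<le> n \<Longrightarrow> pr K l d (take n hs) u = pr K l d hs u"
  by (rule pr_cong) auto

lemma pr_upd: "1 \<le> s \<Longrightarrow> u \<le> s + d s \<Longrightarrow> pr K l d (hs[s - 1 := b]) u = pr K l d hs u"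
proof (rule pr_cong)
  fix s' assume a: "1 \<le> s" "u \<le> s + d s" "1 \<le> s'" "s' < u" "s' + d s' < u"
  hence "s' \<noteq> s" by auto
  hence "s' - 1 \<noteq> s - 1" using a by arith
  thus "hs[s - 1 := b] ! (s' - 1) = hs ! (s' - 1)" by simp
qed

lemma pr_upd0: "1 \<le> s \<Longrightarrow> u \<le> s + d s \<Longrightarrow> pr K l d (hs[s - Suc 0 := b]) u = pr K l d hs u"
  using pr_upd[of s u d K l hs b] by simp

lemma indep_T:
  assumes K1: "K \<ge> 1" and s: "1 \<le> s" "s \<le> n" "n \<le> T" "n \<le> s + d s" and a: "a \<in> {1..K}"
    and G: "\<And>hs b. hs \<in> H K n \<Longrightarrow> b \<in> {1..K} \<Longrightarrow> G (hs[s - 1 := b]) = G hs"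
    and F: "\<And>hs. hs \<in> H K T \<Longrightarrow> F hs = G (take n hs)"
    and F': "\<And>hs. hs \<in> H K T \<Longrightarrow> F' hs = (if hs ! (s - 1) = a then F hs / pr K l d hs s a else 0)"
  shows "E K l d T F' = E K l d T F"
proof -
  have "E K l d T F' = E K l d n (\<lambda>hs. if hs ! (s - 1) = a then G hs / pr K l d hs s a else 0)"
  proof (rule E_trunc'[OF K1 s(3)])
    fix hs assume hs: "hs \<in> H K T"
    have "s - 1 < n" using s by simp
    hence "take n hs ! (s - 1) = hs ! (s - 1)" by simp
    moreover have "pr K l d (take n hs) s = pr K l d hs s" using s by (intro pr_take) simp
    ultimately show "F' hs = (if take n hs ! (s - 1) = a then G (take n hs) / pr K l d (take n hs) s a else 0)"
      using F'[OF hs] F[OF hs] by simp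
  qed
  also have "... = E K l d n G" by (rule indep[where d=d and K=K and l=l and s=s and n=n and a=a and G=G, OF K1 s(1,2,4) a G])
  also have "... = E K l d T F" using F by (intro E_trunc'[OF K1 s(3), symmetric]) auto
  finally show ?thesis .
qed

context ep begin

abbreviation EE :: "(nat list \<Rightarrow> real) \<Rightarrow> real" where "EE f \<equiv> E K l d T f"
definition play :: "nat list \<Rightarrow> nat \<Rightarrow> nat \<Rightarrow> real" where
  "play hs u s = (\<Sum>b\<in>{1..K}. pr K l d hs u b * l s b)"

lemma nthH: "hs \<in> H K T \<Longrightarrow> s \<in> {1..T} \<Longrightarrow> hs ! (s - 1) \<in> {1..K}"
proof -
  assume a: "hs \<in> H K T" "s \<in> {1..T}"
  hence "s - 1 < length hs" by (auto simp: H_def)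
  thus ?thesis using a nth_mem unfolding H_def by blast
qed

lemma lh_take: "s \<le> n \<Longrightarrow> 1 \<le> s \<Longrightarrow> lh (take n hs) s b = lh hs s b"
  unfolding lh_def by (simp add: pr_take)

lemma lh_upd_other: assumes "1 \<le> s" "1 \<le> s'" "s' \<noteq> s" "s' \<le> s + d s" shows "lh (hs[s - 1 := c]) s' b = lh hs s' b"
proof -
  have "s' - 1 \<noteq> s - 1" using assms by arith
  hence "hs[s - 1 := c] ! (s' - 1) = hs ! (s' - 1)" by simp
  moreover have "pr K l d (hs[s - 1 := c]) s' = pr K l d hs s'" using assms by (intro pr_upd) auto
  ultimately show ?thesis unfolding lh_def by simp
qed

lemma E_play: assumes s: "s \<in> {1..T}"
  shows "EE (\<lambda>hs. l s (hs ! (s - 1))) = EE (\<lambda>hs. play hs s s)"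
proof -
  have "EE (\<lambda>hs. l s (hs ! (s - 1))) = EE (\<lambda>hs. \<Sum>a\<in>{1..K}. if hs ! (s - 1) = a then (pr K l d hs s a * l s a) / pr K l d hs s a else 0)"
  proof (rule E_cong)
    fix hs assume hs: "hs \<in> H K T"
    have A: "hs ! (s - 1) \<in> {1..K}" using nthH[OF hs s] .
    have p: "pr K l d hs s (hs ! (s - 1)) > 0" using pr_pos[OF K1] s by auto
    show "l s (hs ! (s - 1)) = (\<Sum>a\<in>{1..K}. if hs ! (s - 1) = a then (pr K l d hs s a * l s a) / pr K l d hs s a else 0)"
      using A p by (simp add: sum.delta)
  qed
  also have "... = (\<Sum>a\<in>{1..K}. EE (\<lambda>hs. if hs ! (s - 1) = a then (pr K l d hs s a * l s a) / pr K l d hs s a else 0))"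
    by (rule E_sum)
  also have "... = (\<Sum>a\<in>{1..K}. EE (\<lambda>hs. pr K l d hs s a * l s a))"
  proof (rule sum.cong[OF refl])
    fix a assume a: "a \<in> {1..K}"
    show "EE (\<lambda>hs. if hs ! (s - 1) = a then (pr K l d hs s a * l s a) / pr K l d hs s a else 0) = EE (\<lambda>hs. pr K l d hs s a * l s a)"
      using s by (intro indep_T[OF K1 _ order_refl _ _ a, where G="\<lambda>hs. pr K l d hs s a * l s a"])
                 (auto simp: pr_upd pr_upd0 pr_take)
  qed
  also have "... = EE (\<lambda>hs. play hs s s)" unfolding play_def by (rule E_sum[symmetric])
  finally show ?thesis .
qed

lemma E_lh: assumes s: "s \<in> {1..T}" and a: "a \<in> {1..K}" shows "EE (\<lambda>hs. lh hs s a) = l s a"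
proof -
  have "EE (\<lambda>hs. lh hs s a) = EE (\<lambda>hs. l s a)"
    using s by (intro indep_T[OF K1 _ order_refl _ _ a, where G="\<lambda>hs. l s a"]) (auto simp: lh_def)
  thus ?thesis using E_const[OF K1] by simp
qed

lemma E_arr: assumes s: "s \<in> {r..e}" "kept s" and u: "u = s + d s" "u \<le> e"
  shows "EE (\<lambda>hs. \<Sum>b\<in>{1..K}. pr K l d hs u b * lh hs s b) = EE (\<lambda>hs. play hs u s)"
proof -
  have s1: "1 \<le> s" using s r1 by auto
  have "EE (\<lambda>hs. \<Sum>b\<in>{1..K}. pr K l d hs u b * lh hs s b) = (\<Sum>b\<in>{1..K}. EE (\<lambda>hs. pr K l d hs u b * lh hs s b))"
    by (rule E_sum)
  also have "... = (\<Sum>b\<in>{1..K}. EE (\<lambda>hs. pr K l d hs u b * l s b))"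
  proof (rule sum.cong[OF refl])
    fix b assume b: "b \<in> {1..K}"
    show "EE (\<lambda>hs. pr K l d hs u b * lh hs s b) = EE (\<lambda>hs. pr K l d hs u b * l s b)"
      using s1 u eT by (intro indep_T[OF K1 s1 _ _ _ b, where n=u and G="\<lambda>hs. pr K l d hs u b * l s b"])
                 (auto simp: pr_upd pr_upd0 pr_take lh_def)
  qed
  also have "... = EE (\<lambda>hs. play hs u s)" unfolding play_def by (rule E_sum[symmetric])
  finally show ?thesis .
qed

lemma arrD: "s \<in> arr u \<Longrightarrow> s \<in> {r..u} \<and> s + d s = u \<and> kept s" unfolding arr_def by auto

lemma E_diag: assumes s: "s \<in> arr u" and u: "u \<le> e" and b: "b \<in> {1..K}"
  shows "EE (\<lambda>hs. pr K l d hs u b * (lh hs s b)^2) \<le> 2"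
proof -
  have sa: "s \<in> {r..u}" "s + d s = u" "kept s" using arrD[OF s] by auto
  have s1: "1 \<le> s" using sa r1 by auto
  have "EE (\<lambda>hs. pr K l d hs u b * (lh hs s b)^2) = EE (\<lambda>hs. pr K l d hs u b * (l s b)^2 / pr K l d hs s b)"
  proof (intro indep_T[OF K1 s1 _ _ _ b, where n=u and G="\<lambda>hs. pr K l d hs u b * (l s b)^2 / pr K l d hs s b"])
    fix hs assume "hs \<in> H K T"
    show "pr K l d hs u b * (lh hs s b)\<^sup>2 = (if hs ! (s - 1) = b then pr K l d hs u b * (l s b)\<^sup>2 / pr K l d hs s b / pr K l d hs s b else 0)"
      unfolding lh_def by (auto simp: power2_eq_square)
  qed (use sa u eT s1 in \<open>auto simp: pr_upd pr_upd0 pr_take\<close>)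
  also have "... \<le> EE (\<lambda>hs. 2)"
  proof (rule E_mono[OF K1])
    fix hs assume hs: "hs \<in> H K T"
    have sre: "s \<in> {r..e}" using sa u by auto
    have p: "pr K l d hs s b > 0" using pr_pos[OF K1] s1 by auto
    have rat: "pr K l d hs u b \<le> 2 * pr K l d hs s b"
      using sa u re b by (intro ratio[OF hs]) auto
    have L: "0 \<le> l s b" "l s b \<le> 1" using lb[OF rT[OF sre] b] by auto
    have L2: "(l s b)^2 \<le> 1" using L by (simp add: power_le_one)
    have "pr K l d hs u b * (l s b)^2 \<le> 2 * pr K l d hs s b * 1"
      using rat L2 p by (intro mult_mono) auto
    thus "pr K l d hs u b * (l s b)^2 / pr K l d hs s b \<le> 2" using p by (simp add: divide_le_eq)
  qed
  also have "... = 2" by (rule E_const[OF K1])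
  finally show ?thesis .
qed

lemma E_cross_lt: assumes s: "s \<in> arr u" and s': "s' \<in> arr u" and lt: "s < s'" and u: "u \<le> e" and b: "b \<in> {1..K}"
  shows "EE (\<lambda>hs. pr K l d hs u b * lh hs s b * lh hs s' b) = EE (\<lambda>hs. pr K l d hs u b * l s b * l s' b)"
proof -
  have sa: "s \<in> {r..u}" "s + d s = u" "kept s" using arrD[OF s] by auto
  have sa': "s' \<in> {r..u}" "s' + d s' = u" "kept s'" using arrD[OF s'] by auto
  have s1: "1 \<le> s" "1 \<le> s'" using sa sa' r1 by auto
  have "EE (\<lambda>hs. pr K l d hs u b * lh hs s b * lh hs s' b) = EE (\<lambda>hs. pr K l d hs u b * lh hs s b * l s' b)"
  proof (intro indep_T[OF K1 s1(2) _ _ _ b, where n=u and G="\<lambda>hs. pr K l d hs u b * lh hs s b * l s' b"])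
    fix hs assume "hs \<in> H K T"
    show "pr K l d hs u b * lh hs s b * lh hs s' b = (if hs ! (s' - 1) = b then pr K l d hs u b * lh hs s b * l s' b / pr K l d hs s' b else 0)"
      unfolding lh_def[of hs s' b] by auto
  next
    fix hs c assume "hs \<in> H K u" "c \<in> {1..K}"
    have "lh (hs[s' - 1 := c]) s b = lh hs s b" using s1 lt by (intro lh_upd_other) auto
    moreover have "pr K l d (hs[s' - 1 := c]) u = pr K l d hs u" using s1 sa' by (intro pr_upd) auto
    ultimately show "pr K l d (hs[s' - 1 := c]) u b * lh (hs[s' - 1 := c]) s b * l s' b = pr K l d hs u b * lh hs s b * l s' b"
      by simp
  next
    fix hs assume "hs \<in> H K T"
    show "pr K l d hs u b * lh hs s b * l s' b = pr K l d (take u hs) u b * lh (take u hs) s b * l s' b"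
      using sa s1 by (simp add: pr_take lh_take)
  qed (use sa' u eT in auto)
  also have "... = EE (\<lambda>hs. pr K l d hs u b * l s b * l s' b)"
  proof (intro indep_T[OF K1 s1(1) _ _ _ b, where n=u and G="\<lambda>hs. pr K l d hs u b * l s b * l s' b"])
    fix hs assume "hs \<in> H K T"
    show "pr K l d hs u b * lh hs s b * l s' b = (if hs ! (s - 1) = b then pr K l d hs u b * l s b * l s' b / pr K l d hs s b else 0)"
      unfolding lh_def[of hs s b] by auto
  qed (use sa u eT s1 in \<open>auto simp: pr_upd pr_upd0 pr_take\<close>)
  finally show ?thesis .
qed

lemma E_cross: assumes s: "s \<in> arr u" and s': "s' \<in> arr u" and ne: "s \<noteq> s'" and u: "u \<le> e"
  shows "EE (\<lambda>hs. \<Sum>b\<in>{1..K}. pr K l d hs u b * lh hs s b * lh hs s' b) \<le> 1"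
proof -
  have sre: "s \<in> {r..e}" "s' \<in> {r..e}" using arrD[OF s] arrD[OF s'] u by auto
  have eq: "EE (\<lambda>hs. pr K l d hs u b * lh hs s b * lh hs s' b) = EE (\<lambda>hs. pr K l d hs u b * l s b * l s' b)"
    if b: "b \<in> {1..K}" for b
  proof (cases "s < s'")
    case True thus ?thesis using E_cross_lt[OF s s' True u b] by simp
  next
    case False
    hence "s' < s" using ne by simp
    from E_cross_lt[OF s' s this u b] show ?thesis by (simp add: mult_ac)
  qed
  have "EE (\<lambda>hs. \<Sum>b\<in>{1..K}. pr K l d hs u b * lh hs s b * lh hs s' b) = (\<Sum>b\<in>{1..K}. EE (\<lambda>hs. pr K l d hs u b * lh hs s b * lh hs s' b))"
    by (rule E_sum)
  also have "... = (\<Sum>b\<in>{1..K}. EE (\<lambda>hs. pr K l d hs u b * l s b * l s' b))" using eq by simp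
  also have "... \<le> (\<Sum>b\<in>{1..K}. EE (\<lambda>hs. pr K l d hs u b))"
  proof (intro sum_mono E_mono[OF K1])
    fix b hs assume b: "b \<in> {1..K}" and hs: "hs \<in> H K T"
    have L: "0 \<le> l s b" "l s b \<le> 1" "0 \<le> l s' b" "l s' b \<le> 1" using lb[OF rT[OF sre(1)] b] lb[OF rT[OF sre(2)] b] by auto
    have p: "pr K l d hs u b \<ge> 0" using pr_pos[OF K1, where hs=hs and t=u and a=b and l=l and d=d] sre arrD[OF s] r1 by auto
    have "l s b * l s' b \<le> 1 * 1" using L by (intro mult_mono) auto
    hence "pr K l d hs u b * (l s b * l s' b) \<le> pr K l d hs u b * 1" using p by (intro mult_left_mono) auto
    thus "pr K l d hs u b * l s b * l s' b \<le> pr K l d hs u b" by (simp add: mult.assoc)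
  qed
  also have "... = EE (\<lambda>hs. \<Sum>b\<in>{1..K}. pr K l d hs u b)" by (rule E_sum[symmetric])
  also have "... = EE (\<lambda>hs. 1)"
  proof (rule E_cong)
    fix hs
    have "1 \<le> u" using arrD[OF s] r1 by auto
    thus "(\<Sum>b\<in>{1..K}. pr K l d hs u b) = 1" by (rule pr_sum[OF K1])
  qed
  also have "... = 1" by (rule E_const[OF K1])
  finally show ?thesis .
qed

end


context ep begin

lemma PX2_expand: "PX2 hs u = (\<Sum>s\<in>arr u. \<Sum>s'\<in>arr u. \<Sum>b\<in>{1..K}. pr K l d hs u b * lh hs s b * lh hs s' b)"
proof -
  have "PX2 hs u = (\<Sum>b\<in>{1..K}. \<Sum>s\<in>arr u. \<Sum>s'\<in>arr u. pr K l d hs u b * lh hs s b * lh hs s' b)"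
    unfolding PX2_def
  proof (intro sum.cong refl)
    fix b
    show "pr K l d hs u b * (X hs u b)^2 = (\<Sum>s\<in>arr u. \<Sum>s'\<in>arr u. pr K l d hs u b * lh hs s b * lh hs s' b)"
    proof -
      have "X hs u b * X hs u b = (\<Sum>s\<in>arr u. \<Sum>s'\<in>arr u. lh hs s b * lh hs s' b)"
        unfolding X_def by (rule sum_product)
      thus ?thesis by (simp add: power2_eq_square sum_distrib_left mult.assoc)
    qed
  qed
  also have "... = (\<Sum>s\<in>arr u. \<Sum>b\<in>{1..K}. \<Sum>s'\<in>arr u. pr K l d hs u b * lh hs s b * lh hs s' b)"
    by (rule sum.swap)
  also have "... = (\<Sum>s\<in>arr u. \<Sum>s'\<in>arr u. \<Sum>b\<in>{1..K}. pr K l d hs u b * lh hs s b * lh hs s' b)"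
    by (intro sum.cong refl sum.swap)
  finally show ?thesis .
qed

lemma E_PX2: assumes u: "u \<le> e"
  shows "EE (\<lambda>hs. PX2 hs u) \<le> (\<Sum>s\<in>arr u. 2 * real K + real (card (arr u - {s})))"
proof -
  have "EE (\<lambda>hs. PX2 hs u) = (\<Sum>s\<in>arr u. \<Sum>s'\<in>arr u. EE (\<lambda>hs. \<Sum>b\<in>{1..K}. pr K l d hs u b * lh hs s b * lh hs s' b))"
    unfolding PX2_expand by (simp add: E_sum)
  also have "... \<le> (\<Sum>s\<in>arr u. 2 * real K + real (card (arr u - {s})))"
  proof (rule sum_mono)
    fix s assume s: "s \<in> arr u"
    let ?g = "\<lambda>s'. EE (\<lambda>hs. \<Sum>b\<in>{1..K}. pr K l d hs u b * lh hs s b * lh hs s' b)"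
    have A: "(\<Sum>s'\<in>arr u. ?g s') = ?g s + (\<Sum>s'\<in>arr u - {s}. ?g s')"
      by (rule sum.remove[OF finite_arr s])
    have B1: "?g s = (\<Sum>b\<in>{1..K}. EE (\<lambda>hs. pr K l d hs u b * (lh hs s b)^2))"
      by (simp add: E_sum power2_eq_square mult.assoc)
    have B2: "(\<Sum>b\<in>{1..K}. EE (\<lambda>hs. pr K l d hs u b * (lh hs s b)^2)) \<le> (\<Sum>b\<in>{1..K}. 2)"
      by (rule sum_mono) (rule E_diag[OF s u], assumption)
    have B3: "(\<Sum>b\<in>{1..K}. (2::real)) = 2 * real K" by simp
    have C1: "(\<Sum>s'\<in>arr u - {s}. ?g s') \<le> (\<Sum>s'\<in>arr u - {s}. 1)"
      by (rule sum_mono) (rule E_cross[OF s _ _ u], auto)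
    have C2: "(\<Sum>s'\<in>arr u - {s}. (1::real)) = real (card (arr u - {s}))" by simp
    show "(\<Sum>s'\<in>arr u. ?g s') \<le> 2 * real K + real (card (arr u - {s}))"
      using A B1 B2 B3 C1 C2 by linarith
  qed
  finally show ?thesis .
qed

lemma E_PX: assumes u: "u \<le> e"
  shows "EE (\<lambda>hs. PX hs u) \<le> real (card (arr u))"
proof -
  have "EE (\<lambda>hs. PX hs u) = EE (\<lambda>hs. \<Sum>s\<in>arr u. \<Sum>b\<in>{1..K}. pr K l d hs u b * lh hs s b)"
    unfolding PX_def X_def by (intro E_cong) (simp add: sum_distrib_left, rule sum.swap)
  also have "... = (\<Sum>s\<in>arr u. EE (\<lambda>hs. \<Sum>b\<in>{1..K}. pr K l d hs u b * lh hs s b))" by (rule E_sum)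
  also have "... = (\<Sum>s\<in>arr u. EE (\<lambda>hs. play hs u s))"
  proof (intro sum.cong refl E_arr)
    fix s assume "s \<in> arr u" thus "s \<in> {r..e}" "kept s" "u = s + d s" using arrD[of s u] u by auto
  qed (rule u)
  also have "... \<le> (\<Sum>s\<in>arr u. 1)"
  proof (intro sum_mono)
    fix s assume s: "s \<in> arr u"
    have "EE (\<lambda>hs. play hs u s) \<le> EE (\<lambda>hs. 1)"
    proof (rule E_mono[OF K1])
      fix hs assume hs: "hs \<in> H K T"
      have sre: "s \<in> {r..e}" using arrD[OF s] u by auto
      have u1: "1 \<le> u" using arrD[OF s] r1 by auto
      have "play hs u s \<le> (\<Sum>b\<in>{1..K}. pr K l d hs u b * 1)" unfolding play_def
        using lb[OF rT[OF sre]] pr_pos[OF K1 u1, where hs=hs and l=l and d=d]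
        by (intro sum_mono mult_left_mono) (auto intro: less_imp_le)
      also have "... = 1" using pr_sum[OF K1 u1] by simp
      finally show "play hs u s \<le> 1" .
    qed
    thus "EE (\<lambda>hs. play hs u s) \<le> 1" using E_const[OF K1] by simp
  qed
  finally show ?thesis by simp
qed

end


lemma card_filter_sum: "finite A \<Longrightarrow> card {x\<in>A. P x} = (\<Sum>x\<in>A. if P x then 1 else (0::nat))"
  by (simp add: sum.inter_filter[symmetric])

context ep begin

definition Kp :: "nat set" where "Kp = {s \<in> {r..e}. kept s}"
definition Gd :: "nat set" where "Gd = recvs (Suc e)"
definition Db :: nat where "Db = (\<Sum>s\<in>Kp. d s)"

lemma finite_Kp: "finite Kp" unfolding Kp_def by simp
lemma finite_Gd: "finite Gd" unfolding Gd_def by (rule finite_recvs)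
lemma Gd_eq: "Gd = {s \<in> {r..e}. kept s \<and> s + d s \<le> e}" unfolding Gd_def recvs_def by auto
lemma Gd_Kp: "Gd \<subseteq> Kp" unfolding Gd_eq Kp_def by auto
lemma arr_Kp: "u \<le> e \<Longrightarrow> arr u \<subseteq> Kp" unfolding arr_def Kp_def by auto

lemma regroup: "(\<Sum>u\<in>{r..e}. \<Sum>s\<in>arr u. f s u) = (\<Sum>s\<in>Gd. f s (s + d s))"
proof -
  have "(\<Sum>s\<in>Gd. f s (s + d s)) = (\<Sum>u\<in>{r..e}. \<Sum>s\<in>{x\<in>Gd. x + d x = u}. f s (s + d s))"
    by (rule sum.group[symmetric]) (auto simp: finite_Gd Gd_eq)
  also have "... = (\<Sum>u\<in>{r..e}. \<Sum>s\<in>arr u. f s u)"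
  proof (rule sum.cong[OF refl])
    fix u assume u: "u \<in> {r..e}"
    have "{x\<in>Gd. x + d x = u} = arr u" using u unfolding Gd_eq arr_def by auto
    thus "(\<Sum>s\<in>{x\<in>Gd. x + d x = u}. f s (s + d s)) = (\<Sum>s\<in>arr u. f s u)"
      by (intro sum.cong) (auto simp: arr_def)
  qed
  finally show ?thesis by simp
qed

lemma swap_count: "(\<Sum>s\<in>Gd. card {s'\<in>Kp. s' < s \<and> s \<le> s' + d s'}) \<le> Db"
proof -
  have "(\<Sum>s\<in>Gd. card {s'\<in>Kp. s' < s \<and> s \<le> s' + d s'}) =
      (\<Sum>s\<in>Gd. \<Sum>s'\<in>Kp. if s' < s \<and> s \<le> s' + d s' then 1 else 0)"
    by (intro sum.cong refl card_filter_sum finite_Kp)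
  also have "... = (\<Sum>s'\<in>Kp. \<Sum>s\<in>Gd. if s' < s \<and> s \<le> s' + d s' then 1 else 0)"
    by (rule sum.swap)
  also have "... = (\<Sum>s'\<in>Kp. card {s\<in>Gd. s' < s \<and> s \<le> s' + d s'})"
    by (intro sum.cong refl card_filter_sum[symmetric] finite_Gd)
  also have "... \<le> (\<Sum>s'\<in>Kp. card {s'<..s' + d s'})"
    by (intro sum_mono card_mono) auto
  also have "... = Db" unfolding Db_def by simp
  finally show ?thesis .
qed

lemma countA: "(\<Sum>s\<in>Gd. card (arr (s + d s) - {s})) \<le> 2 * Db"
proof -
  have each: "card (arr (s + d s) - {s}) \<le> d s + card {s'\<in>Kp. s' < s \<and> s \<le> s' + d s'}" if s: "s \<in> Gd" for s
  proof -
    have ue: "s + d s \<le> e" using s unfolding Gd_eq by auto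
    have "arr (s + d s) - {s} \<subseteq> {s'\<in>Kp. s < s' \<and> s' \<le> s + d s} \<union> {s'\<in>Kp. s' < s \<and> s \<le> s' + d s'}"
      using arr_Kp[OF ue] unfolding arr_def by auto
    hence "card (arr (s + d s) - {s}) \<le> card ({s'\<in>Kp. s < s' \<and> s' \<le> s + d s} \<union> {s'\<in>Kp. s' < s \<and> s \<le> s' + d s'})"
      by (intro card_mono) (auto simp: finite_Kp)
    also have "... \<le> card {s'\<in>Kp. s < s' \<and> s' \<le> s + d s} + card {s'\<in>Kp. s' < s \<and> s \<le> s' + d s'}"
      by (rule card_Un_le)
    also have "card {s'\<in>Kp. s < s' \<and> s' \<le> s + d s} \<le> card {s<..s + d s}"
      by (intro card_mono) auto
    finally show ?thesis by simp
  qed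
  have "(\<Sum>s\<in>Gd. card (arr (s + d s) - {s})) \<le> (\<Sum>s\<in>Gd. d s + card {s'\<in>Kp. s' < s \<and> s \<le> s' + d s'})"
    by (rule sum_mono) (rule each)
  also have "... = (\<Sum>s\<in>Gd. d s) + (\<Sum>s\<in>Gd. card {s'\<in>Kp. s' < s \<and> s \<le> s' + d s'})"
    by (rule sum.distrib)
  also have "(\<Sum>s\<in>Gd. d s) \<le> Db" unfolding Db_def by (intro sum_mono2 finite_Kp Gd_Kp) auto
  finally show ?thesis using swap_count by simp
qed

lemma countB: "(\<Sum>s\<in>Gd. \<Sum>v\<in>{s..<s + d s}. card (arr v)) \<le> 2 * Db"
proof -
  have each: "(\<Sum>v\<in>{s..<s + d s}. card (arr v)) \<le> d s + card {s'\<in>Kp. s' < s \<and> s \<le> s' + d s'}" if s: "s \<in> Gd" for s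
  proof -
    have ue: "s + d s \<le> e" using s unfolding Gd_eq by auto
    have "(\<Sum>v\<in>{s..<s + d s}. card (arr v)) = card (\<Union>v\<in>{s..<s + d s}. arr v)"
      by (rule card_UN_disjoint[symmetric]) (auto simp: finite_arr arr_disj)
    also have "(\<Union>v\<in>{s..<s + d s}. arr v) \<subseteq> {s'\<in>Kp. s \<le> s' \<and> s' < s + d s} \<union> {s'\<in>Kp. s' < s \<and> s \<le> s' + d s'}"
    proof
      fix x assume "x \<in> (\<Union>v\<in>{s..<s + d s}. arr v)"
      then obtain v where v: "v \<in> {s..<s + d s}" "x \<in> arr v" by auto
      have "x \<in> Kp" using arr_Kp[of v] v ue by auto
      thus "x \<in> {s'\<in>Kp. s \<le> s' \<and> s' < s + d s} \<union> {s'\<in>Kp. s' < s \<and> s \<le> s' + d s'}"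
        using v unfolding arr_def by auto
    qed
    hence "card (\<Union>v\<in>{s..<s + d s}. arr v) \<le> card ({s'\<in>Kp. s \<le> s' \<and> s' < s + d s} \<union> {s'\<in>Kp. s' < s \<and> s \<le> s' + d s'})"
      by (intro card_mono) (auto simp: finite_Kp)
    also have "... \<le> card {s'\<in>Kp. s \<le> s' \<and> s' < s + d s} + card {s'\<in>Kp. s' < s \<and> s \<le> s' + d s'}"
      by (rule card_Un_le)
    also have "card {s'\<in>Kp. s \<le> s' \<and> s' < s + d s} \<le> card {s..<s + d s}"
      by (intro card_mono) auto
    finally show ?thesis by simp
  qed
  have "(\<Sum>s\<in>Gd. \<Sum>v\<in>{s..<s + d s}. card (arr v)) \<le> (\<Sum>s\<in>Gd. d s + card {s'\<in>Kp. s' < s \<and> s \<le> s' + d s'})"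
    by (rule sum_mono) (rule each)
  also have "... = (\<Sum>s\<in>Gd. d s) + (\<Sum>s\<in>Gd. card {s'\<in>Kp. s' < s \<and> s \<le> s' + d s'})"
    by (rule sum.distrib)
  also have "(\<Sum>s\<in>Gd. d s) \<le> Db" unfolding Db_def by (intro sum_mono2 finite_Kp Gd_Kp) auto
  finally show ?thesis using swap_count by simp
qed

lemma E_play_le1: assumes s: "s \<in> {1..T}" and u: "1 \<le> u" shows "EE (\<lambda>hs. play hs u s) \<le> 1"
proof -
  have "EE (\<lambda>hs. play hs u s) \<le> EE (\<lambda>hs. 1)"
  proof (rule E_mono[OF K1])
    fix hs assume hs: "hs \<in> H K T"
    have "play hs u s \<le> (\<Sum>b\<in>{1..K}. pr K l d hs u b * 1)" unfolding play_def
      using lb[OF s] pr_pos[OF K1 u, where hs=hs and l=l and d=d]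
      by (intro sum_mono mult_left_mono) (auto intro: less_imp_le)
    also have "... = 1" using pr_sum[OF K1 u] by simp
    finally show "play hs u s \<le> 1" .
  qed
  thus ?thesis using E_const[OF K1] by simp
qed

lemma sqrt_pos: "sqrt (2 ^ m) > 0" by simp

lemma beta_le_sq: "beta K m \<le> sqrt (2 ^ m)"
proof -
  have "4 * exp 1 * ln (real K) \<ge> 4 * 2 * (1/2)"
    using exp1_ge2 lnK_ge[OF K2] by (intro mult_mono) auto
  hence c: "4 * exp 1 * ln (real K) \<ge> 1" by simp
  show ?thesis unfolding beta_def using c sqrt_pos
    by (simp add: divide_le_eq)
qed

lemma card_bad: "real (card ({r..e} - Gd)) \<le> 2 * sqrt (2 ^ m)"
proof -
  let ?Sk = "{s \<in> {r..e}. real (d s) \<ge> beta K m}"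
  let ?NA = "{s \<in> {r..e}. kept s \<and> e < s + d s}"
  have sub: "{r..e} - Gd \<subseteq> ?Sk \<union> ?NA" unfolding Gd_eq kept_def by auto
  have "card ({r..e} - Gd) \<le> card (?Sk \<union> ?NA)" by (intro card_mono sub) auto
  also have "... \<le> card ?Sk + card ?NA" by (rule card_Un_le)
  finally have c1: "real (card ({r..e} - Gd)) \<le> real (card ?Sk) + real (card ?NA)" by linarith
  have "(real (card ?Sk))^2 \<le> 2 ^ m" using ok unfolding epoch_ok_def by simp
  hence c2: "real (card ?Sk) \<le> sqrt (2 ^ m)" by (rule real_le_rsqrt)
  have c3: "real (card ?NA) \<le> beta K m"
  proof (cases "cc = 0")
    case True
    hence "?NA = {}" using kept_iff by auto
    hence "card ?NA = 0" by (simp only: card.empty)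
    thus ?thesis using beta_pos by (metis of_nat_0 less_imp_le)
  next
    case False
    have "card ?NA \<le> card {..<cc - 1}"
    proof (rule card_inj_on_le[of "\<lambda>s. e - s"])
      show "inj_on (\<lambda>s. e - s) ?NA" by (auto simp: inj_on_def)
      show "(\<lambda>s. e - s) ` ?NA \<subseteq> {..<cc - 1}"
      proof
        fix y assume "y \<in> (\<lambda>s. e - s) ` ?NA"
        then obtain s where s: "s \<in> ?NA" "y = e - s" by auto
        have "d s < cc" using s kept_iff by auto
        thus "y \<in> {..<cc - 1}" using s by auto
      qed
    qed simp
    hence "real (card ?NA) \<le> real cc - 1" using False by (simp add: of_nat_diff)
    thus ?thesis using cc_lt by simp
  qed
  show ?thesis using c1 c2 c3 beta_le_sq by linarith
qed

end


context ep begin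

lemma good_part: assumes a: "a \<in> {1..K}"
  shows "(\<Sum>s\<in>Gd. EE (\<lambda>hs. play hs s s) - l s a)
     \<le> ln (real K) / eta K m + eta K m * (real K * real (card Gd) + 3 * real Db)"
proof -
  let ?\<eta> = "eta K m"
  have GdD: "s \<in> {r..e}" "kept s" "s + d s \<le> e" if "s \<in> Gd" for s using that unfolding Gd_eq by auto
  have D1: "EE (\<lambda>hs. play hs s s) \<le> EE (\<lambda>hs. play hs (s + d s) s) + ?\<eta> * (\<Sum>v\<in>{s..<s + d s}. real (card (arr v)))"
    if s: "s \<in> Gd" for s
  proof -
    have sT: "s \<in> {1..T}" using rT GdD[OF s] by auto
    have "EE (\<lambda>hs. play hs s s) - EE (\<lambda>hs. play hs (s + d s) s) = EE (\<lambda>hs. play hs s s - play hs (s + d s) s)"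
      by (rule E_diff[symmetric])
    also have "... \<le> EE (\<lambda>hs. ?\<eta> * (\<Sum>v\<in>{s..<s + d s}. PX hs v))"
      unfolding play_def using GdD[OF s] sT by (intro E_mono[OF K1] drift) auto
    also have "... = ?\<eta> * (\<Sum>v\<in>{s..<s + d s}. EE (\<lambda>hs. PX hs v))" by (simp only: E_cmult E_sum)
    also have "... \<le> ?\<eta> * (\<Sum>v\<in>{s..<s + d s}. real (card (arr v)))"
      using eta_pos GdD[OF s] by (intro mult_left_mono sum_mono E_PX) auto
    finally show ?thesis by simp
  qed
  have D2: "(\<Sum>s\<in>Gd. EE (\<lambda>hs. play hs (s + d s) s)) = EE (\<lambda>hs. \<Sum>u\<in>{r..e}. PX hs u)"
  proof -
    have "(\<Sum>s\<in>Gd. EE (\<lambda>hs. play hs (s + d s) s)) = (\<Sum>s\<in>Gd. EE (\<lambda>hs. \<Sum>b\<in>{1..K}. pr K l d hs (s + d s) b * lh hs s b))"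
      using GdD by (intro sum.cong refl E_arr[symmetric]) auto
    also have "... = EE (\<lambda>hs. \<Sum>s\<in>Gd. \<Sum>b\<in>{1..K}. pr K l d hs (s + d s) b * lh hs s b)" by (rule E_sum[symmetric])
    also have "... = EE (\<lambda>hs. \<Sum>u\<in>{r..e}. PX hs u)"
    proof (rule E_cong)
      fix hs
      have "(\<Sum>u\<in>{r..e}. PX hs u) = (\<Sum>u\<in>{r..e}. \<Sum>s\<in>arr u. \<Sum>b\<in>{1..K}. pr K l d hs u b * lh hs s b)"
      proof (rule sum.cong[OF refl])
        fix u show "PX hs u = (\<Sum>s\<in>arr u. \<Sum>b\<in>{1..K}. pr K l d hs u b * lh hs s b)"
          unfolding PX_def X_def by (simp add: sum_distrib_left, rule sum.swap)
      qed
      also have "... = (\<Sum>s\<in>Gd. \<Sum>b\<in>{1..K}. pr K l d hs (s + d s) b * lh hs s b)" by (rule regroup)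
      finally show "(\<Sum>s\<in>Gd. \<Sum>b\<in>{1..K}. pr K l d hs (s + d s) b * lh hs s b) = (\<Sum>u\<in>{r..e}. PX hs u)" by simp
    qed
    finally show ?thesis .
  qed
  have D3: "EE (\<lambda>hs. \<Sum>u\<in>{r..e}. PX hs u) \<le> ln (real K) / ?\<eta> + (\<Sum>s\<in>Gd. l s a) + ?\<eta> / 2 * (\<Sum>u\<in>{r..e}. EE (\<lambda>hs. PX2 hs u))"
  proof -
    have "EE (\<lambda>hs. \<Sum>u\<in>{r..e}. PX hs u) \<le> EE (\<lambda>hs. ln (real K) / ?\<eta> + (\<Sum>s\<in>Gd. lh hs s a) + ?\<eta> / 2 * (\<Sum>u\<in>{r..e}. PX2 hs u))"
      unfolding Gd_def by (intro E_mono[OF K1] pot a)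
    also have "... = ln (real K) / ?\<eta> + (\<Sum>s\<in>Gd. EE (\<lambda>hs. lh hs s a)) + ?\<eta> / 2 * (\<Sum>u\<in>{r..e}. EE (\<lambda>hs. PX2 hs u))"
    proof -
      have q1: "EE (\<lambda>hs. ln (real K) / ?\<eta> + (\<Sum>s\<in>Gd. lh hs s a) + ?\<eta> / 2 * (\<Sum>u\<in>{r..e}. PX2 hs u))
          = EE (\<lambda>hs. ln (real K) / ?\<eta> + (\<Sum>s\<in>Gd. lh hs s a)) + EE (\<lambda>hs. ?\<eta> / 2 * (\<Sum>u\<in>{r..e}. PX2 hs u))"
        by (rule E_add)
      have q2: "EE (\<lambda>hs. ln (real K) / ?\<eta> + (\<Sum>s\<in>Gd. lh hs s a)) = EE (\<lambda>hs. ln (real K) / ?\<eta>) + EE (\<lambda>hs. \<Sum>s\<in>Gd. lh hs s a)"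
        by (rule E_add)
      have q3: "EE (\<lambda>hs. ln (real K) / ?\<eta>) = ln (real K) / ?\<eta>" by (rule E_const[OF K1])
      have q4: "EE (\<lambda>hs. \<Sum>s\<in>Gd. lh hs s a) = (\<Sum>s\<in>Gd. EE (\<lambda>hs. lh hs s a))" by (rule E_sum)
      have q5: "EE (\<lambda>hs. ?\<eta> / 2 * (\<Sum>u\<in>{r..e}. PX2 hs u)) = ?\<eta> / 2 * EE (\<lambda>hs. \<Sum>u\<in>{r..e}. PX2 hs u)" by (rule E_cmult)
      have q6: "EE (\<lambda>hs. \<Sum>u\<in>{r..e}. PX2 hs u) = (\<Sum>u\<in>{r..e}. EE (\<lambda>hs. PX2 hs u))" by (rule E_sum)
      show ?thesis unfolding q1 q2 q3 q4 q5 q6 ..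
    qed
    also have "(\<Sum>s\<in>Gd. EE (\<lambda>hs. lh hs s a)) = (\<Sum>s\<in>Gd. l s a)"
      using GdD rT a by (intro sum.cong refl E_lh) auto
    finally show ?thesis .
  qed
  have D4: "(\<Sum>u\<in>{r..e}. EE (\<lambda>hs. PX2 hs u)) \<le> 2 * real K * real (card Gd) + 2 * real Db"
  proof -
    have "(\<Sum>u\<in>{r..e}. EE (\<lambda>hs. PX2 hs u)) \<le> (\<Sum>u\<in>{r..e}. \<Sum>s\<in>arr u. 2 * real K + real (card (arr u - {s})))"
      by (intro sum_mono E_PX2) auto
    also have "... = (\<Sum>s\<in>Gd. 2 * real K + real (card (arr (s + d s) - {s})))" by (rule regroup)
    also have "... = 2 * real K * real (card Gd) + real (\<Sum>s\<in>Gd. card (arr (s + d s) - {s}))"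
      by (simp add: sum.distrib)
    also have "real (\<Sum>s\<in>Gd. card (arr (s + d s) - {s})) \<le> real (2 * Db)"
      using countA by (simp only: of_nat_le_iff)
    finally show ?thesis by simp
  qed
  have D5: "(\<Sum>s\<in>Gd. \<Sum>v\<in>{s..<s + d s}. real (card (arr v))) \<le> 2 * real Db"
  proof -
    have "(\<Sum>s\<in>Gd. \<Sum>v\<in>{s..<s + d s}. real (card (arr v))) = real (\<Sum>s\<in>Gd. \<Sum>v\<in>{s..<s + d s}. card (arr v))"
      by simp
    also have "... \<le> real (2 * Db)" using countB by (simp only: of_nat_le_iff)
    finally show ?thesis by simp
  qed
  have F1: "(\<Sum>s\<in>Gd. EE (\<lambda>hs. play hs s s) - l s a) = (\<Sum>s\<in>Gd. EE (\<lambda>hs. play hs s s)) - (\<Sum>s\<in>Gd. l s a)"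
    by (rule sum_subtractf)
  have F2: "(\<Sum>s\<in>Gd. EE (\<lambda>hs. play hs s s)) \<le> (\<Sum>s\<in>Gd. EE (\<lambda>hs. play hs (s + d s) s) + ?\<eta> * (\<Sum>v\<in>{s..<s + d s}. real (card (arr v))))"
    by (rule sum_mono) (rule D1)
  have F3: "(\<Sum>s\<in>Gd. EE (\<lambda>hs. play hs (s + d s) s) + ?\<eta> * (\<Sum>v\<in>{s..<s + d s}. real (card (arr v))))
     = (\<Sum>s\<in>Gd. EE (\<lambda>hs. play hs (s + d s) s)) + ?\<eta> * (\<Sum>s\<in>Gd. \<Sum>v\<in>{s..<s + d s}. real (card (arr v)))"
    by (simp only: sum.distrib sum_distrib_left)
  have F: "(\<Sum>s\<in>Gd. EE (\<lambda>hs. play hs s s) - l s a) \<le>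
      EE (\<lambda>hs. \<Sum>u\<in>{r..e}. PX hs u) + ?\<eta> * (\<Sum>s\<in>Gd. \<Sum>v\<in>{s..<s + d s}. real (card (arr v))) - (\<Sum>s\<in>Gd. l s a)"
    using F1 F2 F3 D2 by linarith
  have e1: "?\<eta> * (\<Sum>s\<in>Gd. \<Sum>v\<in>{s..<s + d s}. real (card (arr v))) \<le> ?\<eta> * (2 * real Db)"
    using D5 eta_pos by (intro mult_left_mono) auto
  have e2: "?\<eta> / 2 * (\<Sum>u\<in>{r..e}. EE (\<lambda>hs. PX2 hs u)) \<le> ?\<eta> / 2 * (2 * real K * real (card Gd) + 2 * real Db)"
    using D4 eta_pos by (intro mult_left_mono) auto
  have "?\<eta> / 2 * (2 * real K * real (card Gd) + 2 * real Db) + ?\<eta> * (2 * real Db) = ?\<eta> * (real K * real (card Gd) + 3 * real Db)"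
    by (simp add: algebra_simps)
  thus ?thesis using F D3 e1 e2 by linarith
qed

lemma epoch_bound: assumes a: "a \<in> {1..K}"
  shows "(\<Sum>s\<in>{r..e}. EE (\<lambda>hs. play hs s s) - l s a) \<le> 6 * sqrt (2 ^ m)"
proof -
  define sq where "sq = sqrt (2 ^ m)"
  have sqpos: "sq > 0" unfolding sq_def by simp
  have sq2: "sq * sq = 2 ^ m" unfolding sq_def by simp
  let ?f = "\<lambda>s. EE (\<lambda>hs. play hs s s) - l s a"
  have Gsub: "Gd \<subseteq> {r..e}" unfolding Gd_eq by auto
  have split: "(\<Sum>s\<in>{r..e}. ?f s) = (\<Sum>s\<in>{r..e} - Gd. ?f s) + (\<Sum>s\<in>Gd. ?f s)"
    by (rule sum.subset_diff[OF Gsub]) simp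
  have bad: "(\<Sum>s\<in>{r..e} - Gd. ?f s) \<le> 2 * sq"
  proof -
    have "(\<Sum>s\<in>{r..e} - Gd. ?f s) \<le> (\<Sum>s\<in>{r..e} - Gd. 1)"
    proof (rule sum_mono)
      fix s assume s: "s \<in> {r..e} - Gd"
      hence sT: "s \<in> {1..T}" using rT by auto
      have "EE (\<lambda>hs. play hs s s) \<le> 1" using sT by (intro E_play_le1) auto
      moreover have "l s a \<ge> 0" using lb[OF sT a] by simp
      ultimately show "?f s \<le> 1" by simp
    qed
    also have "... = real (card ({r..e} - Gd))" by simp
    also have "... \<le> 2 * sq" using card_bad unfolding sq_def .
    finally show ?thesis .
  qed
  have good: "(\<Sum>s\<in>Gd. ?f s) \<le> ln (real K) / eta K m + eta K m * (real K * real (card Gd) + 3 * real Db)"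
    by (rule good_part[OF a])
  have t1: "ln (real K) / eta K m = sq" unfolding eta_eq sq_def using lnK_pos by simp
  have okk: "(exp 1 * real K * real (e - r + 1) / 2 + real Db) * ln (real K) \<le> 2 ^ m"
  proof -
    have "{s \<in> {r..e}. real (d s) < beta K m} = Kp" unfolding Kp_def kept_def ..
    thus ?thesis using ok unfolding epoch_ok_def Db_def by simp
  qed
  have cG: "real (card Gd) \<le> real (e - r + 1)"
  proof -
    have "card Gd \<le> card {r..e}" by (intro card_mono Gsub) simp
    thus ?thesis by simp
  qed
  have t2: "eta K m * (real K * real (card Gd) + 3 * real Db) \<le> 3 * sq"
  proof -
    have "real K * real (card Gd) \<le> real K * real (e - r + 1)" using cG by (intro mult_left_mono) auto
    also have "... \<le> 3 * (exp 1 * real K * real (e - r + 1) / 2)"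
    proof -
      have y0: "real K * real (e - r + 1) \<ge> 0" by simp
      have "3 * (exp 1 * real K * real (e - r + 1) / 2) = (3 * exp 1 / 2) * (real K * real (e - r + 1))" by simp
      moreover have "(3 * exp 1 / 2) * (real K * real (e - r + 1)) \<ge> 1 * (real K * real (e - r + 1))"
        using exp1_ge2 y0 by (intro mult_right_mono) auto
      ultimately show ?thesis by simp
    qed
    finally have "real K * real (card Gd) + 3 * real Db \<le> 3 * (exp 1 * real K * real (e - r + 1) / 2 + real Db)"
      by simp
    hence "ln (real K) * (real K * real (card Gd) + 3 * real Db) \<le> ln (real K) * (3 * (exp 1 * real K * real (e - r + 1) / 2 + real Db))"
      using lnK_pos by (intro mult_left_mono) auto
    also have "... = 3 * ((exp 1 * real K * real (e - r + 1) / 2 + real Db) * ln (real K))" by (simp only: mult_ac)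
    also have "... \<le> 3 * 2 ^ m" using okk by linarith
    finally have A: "ln (real K) * (real K * real (card Gd) + 3 * real Db) \<le> 3 * (sq * sq)" using sq2 by simp
    have "eta K m * (real K * real (card Gd) + 3 * real Db) = ln (real K) * (real K * real (card Gd) + 3 * real Db) / sq"
      unfolding eta_eq sq_def by simp
    also have "... \<le> 3 * (sq * sq) / sq" using A sqpos by (intro divide_right_mono) auto
    also have "... = 3 * sq" using sqpos by simp
    finally show ?thesis .
  qed
  show ?thesis using split bad good t1 t2 unfolding sq_def by linarith
qed

end


lemma geom_sqrt: "(\<Sum>m\<le>M. sqrt (2 ^ m)) \<le> (2 + sqrt 2) * sqrt (2 ^ M)"
proof (induction M)
  case 0 thus ?case by simp
next
  case (Suc M)
  have q: "sqrt (2 ^ Suc M) = sqrt 2 * sqrt (2 ^ M)" by (simp add: real_sqrt_mult)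
  have "(\<Sum>m\<le>Suc M. sqrt (2 ^ m)) = (\<Sum>m\<le>M. sqrt (2 ^ m)) + sqrt (2 ^ Suc M)" by simp
  also have "... \<le> (2 + sqrt 2) * sqrt (2 ^ M) + sqrt 2 * sqrt (2 ^ M)" using Suc q by simp
  also have "... = (2 + sqrt 2) * (sqrt 2 * sqrt (2 ^ M))"
  proof -
    have "sqrt 2 * sqrt 2 = (2::real)" by simp
    thus ?thesis by (simp add: algebra_simps)
  qed
  finally show ?case using q by simp
qed

lemma final_M_bound:
  fixes K T :: nat and d :: "nat \<Rightarrow> nat"
  assumes K2: "K \<ge> 2" and T1: "T \<ge> 1"
  defines "X \<equiv> (real K * real T * exp 1 / 2 + (1 + 4 * exp 1) * real (\<Sum>t=1..T. d t)) * ln (real K)"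
  shows "2 ^ fst (epoch K d T) \<le> 2 * X"
proof -
  define M where "M = fst (epoch K d T)"
  define r0 where "r0 = snd (epoch K d T)"
  define Dt where "Dt = real (\<Sum>t=1..T. d t)"
  have lnK: "ln (real K) \<ge> 1/2" using lnK_ge[OF K2] .
  have Dt0: "Dt \<ge> 0" unfolding Dt_def by (simp add: sum_nonneg)
  have r01: "1 \<le> r0" unfolding r0_def by (rule epoch_snd_ge1)
  have r0T: "r0 \<le> T" unfolding r0_def by (rule epoch_snd_le[OF T1])
  have er0: "epoch K d r0 = epoch K d T"
  proof (rule epoch_const[OF K2 T1])
    show "snd (epoch K d T) \<le> r0" unfolding r0_def by simp
    show "r0 \<le> T" by (rule r0T)
  qed
  obtain p where p: "r0 = Suc p" using r01 by (cases r0) auto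
  have prev: "fst (epoch K d p) < M" using epoch_start_prev[OF K2 T1, of d] p unfolding M_def r0_def by simp
  define m0 where "m0 = fst (epoch K d p)"
  define r' where "r' = snd (epoch K d p)"
  have case2: "\<not> epoch_ok K d m0 r' r0 \<and> M = (LEAST m'. m0 < m' \<and> epoch_ok K d m' r0 r0)"
    using epoch_Suc_cases[OF K2, of d p] prev er0 unfolding M_def m0_def r'_def p by auto
  have r'1: "1 \<le> r'" unfolding r'_def by (rule epoch_snd_ge1)
  have r'r0: "r' \<le> r0"
  proof (cases "p = 0")
    case True thus ?thesis using p r'_def by simp
  next
    case False thus ?thesis using epoch_snd_le[of p K d] p unfolding r'_def by simp
  qed
  have XD: "Dt \<le> (1 + 4 * exp 1) * Dt"
  proof -
    have "4 * exp 1 * Dt \<ge> 0" using Dt0 by simp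
    thus ?thesis by (simp add: algebra_simps)
  qed
  have X1: "(exp 1 * real K / 2 + Dt) * ln (real K) \<le> X"
  proof -
    have "real K * 1 \<le> real K * real T" using T1 by (intro mult_left_mono) auto
    hence "exp 1 * (real K * 1) \<le> exp 1 * (real K * real T)" by (rule mult_left_mono) simp
    hence "exp 1 * real K / 2 \<le> real K * real T * exp 1 / 2" by (simp add: mult_ac)
    hence "exp 1 * real K / 2 + Dt \<le> real K * real T * exp 1 / 2 + (1 + 4 * exp 1) * Dt" using XD by linarith
    thus ?thesis unfolding X_def Dt_def using lnK by (intro mult_right_mono) auto
  qed
  have Xge1: "1 \<le> X"
  proof -
    have "exp 1 * real K / 2 \<ge> 2 * 2 / 2" using exp1_ge2 K2 by (intro divide_right_mono mult_mono) auto
    hence "(exp 1 * real K / 2 + Dt) * ln (real K) \<ge> 2 * (1/2)" using Dt0 lnK by (intro mult_mono) auto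
    thus ?thesis using X1 by simp
  qed
  show ?thesis
  proof (cases "m0 < M - 1")
    case True
    have "\<not> (m0 < M - 1 \<and> epoch_ok K d (M - 1) r0 r0)"
      using not_less_Least[of "M - 1" "\<lambda>m'. m0 < m' \<and> epoch_ok K d m' r0 r0"] case2 True by auto
    hence nok: "\<not> epoch_ok K d (M - 1) r0 r0" using True by simp
    have c1: "(real (card {s \<in> {r0..r0}. real (d s) \<ge> beta K (M - 1)}))\<^sup>2 \<le> 1"
    proof -
      have "card {s \<in> {r0..r0}. real (d s) \<ge> beta K (M - 1)} \<le> card {r0}" by (intro card_mono) auto
      thus ?thesis by (simp add: power_le_one)
    qed
    have sum1: "real (\<Sum>s \<in> {s \<in> {r0..r0}. real (d s) < beta K (M - 1)}. d s) \<le> Dt"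
    proof -
      have "(\<Sum>s \<in> {s \<in> {r0..r0}. real (d s) < beta K (M - 1)}. d s) \<le> (\<Sum>s\<in>{1..T}. d s)"
        using r01 r0T by (intro sum_mono2) auto
      thus ?thesis unfolding Dt_def by (simp only: of_nat_le_iff)
    qed
    have c2: "(exp 1 * real K * real (r0 - r0 + 1) / 2 + real (\<Sum>s \<in> {s \<in> {r0..r0}. real (d s) < beta K (M - 1)}. d s)) * ln (real K) \<le> X"
    proof -
      have "(exp 1 * real K * real (r0 - r0 + 1) / 2 + real (\<Sum>s \<in> {s \<in> {r0..r0}. real (d s) < beta K (M - 1)}. d s)) * ln (real K)
          \<le> (exp 1 * real K / 2 + Dt) * ln (real K)" using sum1 lnK by (intro mult_right_mono) auto
      thus ?thesis using X1 by simp
    qed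
    have lt: "2 ^ (M - 1) < max ((real (card {s \<in> {r0..r0}. real (d s) \<ge> beta K (M - 1)}))\<^sup>2)
         ((exp 1 * real K * real (r0 - r0 + 1) / 2 + real (\<Sum>s \<in> {s \<in> {r0..r0}. real (d s) < beta K (M - 1)}. d s)) * ln (real K))"
      using nok unfolding epoch_ok_def not_le .
    have "max ((real (card {s \<in> {r0..r0}. real (d s) \<ge> beta K (M - 1)}))\<^sup>2)
         ((exp 1 * real K * real (r0 - r0 + 1) / 2 + real (\<Sum>s \<in> {s \<in> {r0..r0}. real (d s) < beta K (M - 1)}. d s)) * ln (real K)) \<le> X"
      using c1 c2 Xge1 by (intro max.boundedI) linarith+
    hence "2 ^ (M - 1) < (X::real)" using lt by linarith
    moreover have "(2::real) ^ M = 2 * 2 ^ (M - 1)" using True by (cases M) auto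
    ultimately show ?thesis unfolding M_def by simp
  next
    case False
    hence "M \<le> Suc m0" using prev unfolding m0_def by simp
    hence "(2::real) ^ M \<le> 2 ^ Suc m0" by (intro power_increasing) auto
    hence MM: "(2::real) ^ M \<le> 2 * 2 ^ m0" by simp
    have nok: "\<not> epoch_ok K d m0 r' r0" using case2 by simp
    let ?Sk = "{s \<in> {r'..r0}. real (d s) \<ge> beta K m0}"
    let ?Db = "real (\<Sum>s \<in> {s \<in> {r'..r0}. real (d s) < beta K m0}. d s)"
    have DbD: "?Db \<le> Dt"
    proof -
      have "(\<Sum>s \<in> {s \<in> {r'..r0}. real (d s) < beta K m0}. d s) \<le> (\<Sum>s\<in>{1..T}. d s)"
        using r'1 r0T by (intro sum_mono2) auto
      thus ?thesis unfolding Dt_def by (simp only: of_nat_le_iff)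
    qed
    have A: "(exp 1 * real K * real (r0 - r' + 1) / 2 + ?Db) * ln (real K) \<le> X"
    proof -
      have "r0 - r' + 1 \<le> T" using r'1 r0T T1 by arith
      hence "real (r0 - r' + 1) \<le> real T" by (simp only: of_nat_le_iff)
      hence "(exp 1 * real K) * real (r0 - r' + 1) \<le> (exp 1 * real K) * real T"
        by (rule mult_left_mono) simp
      hence h: "(exp 1 * real K) * real (r0 - r' + 1) / 2 \<le> (exp 1 * real K) * real T / 2"
        by (rule divide_right_mono) simp
      have "(exp 1 * real K) * real T = real K * real T * exp 1" by simp
      hence "exp 1 * real K * real (r0 - r' + 1) / 2 \<le> real K * real T * exp 1 / 2" using h by simp
      hence "exp 1 * real K * real (r0 - r' + 1) / 2 + ?Db \<le> real K * real T * exp 1 / 2 + (1 + 4 * exp 1) * Dt"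
        using DbD XD by linarith
      thus ?thesis unfolding X_def Dt_def using lnK by (intro mult_right_mono) auto
    qed
    have B: "(real (card ?Sk))\<^sup>2 > 2 ^ m0 \<Longrightarrow> 2 ^ m0 \<le> X"
    proof -
      assume h: "(real (card ?Sk))\<^sup>2 > 2 ^ m0"
      define sq where "sq = sqrt (2 ^ m0)"
      have sqpos: "sq > 0" unfolding sq_def by simp
      have "sq < sqrt ((real (card ?Sk))\<^sup>2)" unfolding sq_def using h by (rule real_sqrt_less_mono)
      hence "sq < real (card ?Sk)" by simp
      have cb: "real (card ?Sk) * beta K m0 \<le> Dt"
      proof -
        have "real (card ?Sk) * beta K m0 = (\<Sum>s\<in>?Sk. beta K m0)" by simp
        also have "... \<le> (\<Sum>s\<in>?Sk. real (d s))" by (intro sum_mono) auto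
        also have "... \<le> (\<Sum>s\<in>{1..T}. real (d s))" using r'1 r0T by (intro sum_mono2) auto
        finally show ?thesis unfolding Dt_def by simp
      qed
      have bdef: "beta K m0 = sq / (4 * exp 1 * ln (real K))" unfolding beta_def sq_def ..
      have lnpos: "4 * exp 1 * ln (real K) > 0" using lnK by simp
      have "2 ^ m0 = sq * sq" unfolding sq_def by simp
      also have "... \<le> real (card ?Sk) * sq" using \<open>sq < real (card ?Sk)\<close> sqpos by (intro mult_right_mono) auto
      also have "... = 4 * exp 1 * ln (real K) * (real (card ?Sk) * beta K m0)" unfolding bdef using lnpos lnK by (simp add: field_simps)
      also have "... \<le> 4 * exp 1 * ln (real K) * Dt" using cb lnpos by (intro mult_left_mono) auto
      also have "... \<le> X"
      proof -
        have "4 * exp 1 * Dt \<le> real K * real T * exp 1 / 2 + (1 + 4 * exp 1) * Dt"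
          using Dt0 by (simp add: algebra_simps)
        hence "(4 * exp 1 * Dt) * ln (real K) \<le> X" unfolding X_def Dt_def using lnK by (intro mult_right_mono) auto
        thus ?thesis by (simp add: mult_ac)
      qed
      finally show ?thesis .
    qed
    have "(2::real) ^ m0 \<le> X"
    proof (cases "(real (card ?Sk))\<^sup>2 > 2 ^ m0")
      case True thus ?thesis using B by simp
    next
      case False
      have lt: "2 ^ m0 < max ((real (card ?Sk))\<^sup>2) ((exp 1 * real K * real (r0 - r' + 1) / 2 + ?Db) * ln (real K))"
        using nok unfolding epoch_ok_def not_le .
      hence "2 ^ m0 < (exp 1 * real K * real (r0 - r' + 1) / 2 + ?Db) * ln (real K)"
        using False by (simp add: less_max_iff_disj)
      thus ?thesis using A by simp
    qed
    thus ?thesis using MM unfolding M_def by simp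
  qed
qed


lemma epoch_group:
  fixes K T :: nat and l :: "nat \<Rightarrow> nat \<Rightarrow> real" and d :: "nat \<Rightarrow> nat"
  assumes K2: "K \<ge> 2" and lb: "\<And>t a. t \<in> {1..T} \<Longrightarrow> a \<in> {1..K} \<Longrightarrow> 0 \<le> l t a \<and> l t a \<le> 1"
    and a: "a \<in> {1..K}"
  shows "(\<Sum>t\<in>{t\<in>{1..T}. fst (epoch K d t) = m}. E K l d T (\<lambda>hs. l t (hs ! (t - 1))) - l t a) \<le> 6 * sqrt (2 ^ m)"
proof (cases "{t\<in>{1..T}. fst (epoch K d t) = m} = {}")
  case True
  have "(0::real) \<le> 6 * sqrt (2 ^ m)" by simp
  thus ?thesis by (simp only: True sum.empty)
next
  case False
  define S where "S = {t\<in>{1..T}. fst (epoch K d t) = m}"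
  have finS: "finite S" unfolding S_def by simp
  have neS: "S \<noteq> {}" using False unfolding S_def .
  define e where "e = Max S"
  have eS: "e \<in> S" unfolding e_def using finS neS by (rule Max_in)
  have e1: "1 \<le> e" and eT: "e \<le> T" and em: "fst (epoch K d e) = m" using eS unfolding S_def by auto
  define r where "r = snd (epoch K d e)"
  have epe: "epoch K d e = (m, r)" using em unfolding r_def by (metis prod.collapse)
  have r1: "1 \<le> r" unfolding r_def by (rule epoch_snd_ge1)
  have re: "r \<le> e" unfolding r_def by (rule epoch_snd_le[OF e1])
  have epc: "\<And>u. u \<in> {r..e} \<Longrightarrow> epoch K d u = (m, r)"
  proof -
    fix u assume u: "u \<in> {r..e}"
    have "epoch K d u = epoch K d e"
      by (rule epoch_const[OF K2 e1]) (use u r_def in auto)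
    thus "epoch K d u = (m, r)" using epe by simp
  qed
  have ok: "epoch_ok K d m r e" using epoch_ok_cur[OF K2 e1, of d] epe by simp
  have Seq: "S = {r..e}"
  proof
    show "{r..e} \<subseteq> S"
    proof
      fix u assume u: "u \<in> {r..e}"
      thus "u \<in> S" unfolding S_def using epc[OF u] r1 eT by auto
    qed
  next
    show "S \<subseteq> {r..e}"
    proof
      fix t assume t: "t \<in> S"
      have te: "t \<le> e" unfolding e_def using finS t by (rule Max_ge)
      have "\<not> t < r"
      proof
        assume tr: "t < r"
        have "fst (epoch K d t) \<le> fst (epoch K d (r - 1))" using tr by (intro epoch_fst_mono[OF K2]) auto
        also have "... < fst (epoch K d e)" using epoch_start_prev[OF K2 e1, of d] unfolding r_def by simp
        finally show False using t em unfolding S_def by simp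
      qed
      thus "t \<in> {r..e}" using te by simp
    qed
  qed
  interpret I: ep K l d T m r e
    using K2 lb r1 re eT epc ok by unfold_locales auto
  have "(\<Sum>t\<in>S. E K l d T (\<lambda>hs. l t (hs ! (t - 1))) - l t a) = (\<Sum>t\<in>{r..e}. E K l d T (\<lambda>hs. I.play hs t t) - l t a)"
    unfolding Seq
  proof (rule sum.cong[OF refl])
    fix t assume "t \<in> {r..e}"
    hence "t \<in> {1..T}" using r1 eT by auto
    thus "E K l d T (\<lambda>hs. l t (hs ! (t - 1))) - l t a = E K l d T (\<lambda>hs. I.play hs t t) - l t a"
      using I.E_play by simp
  qed
  also have "... \<le> 6 * sqrt (2 ^ m)" by (rule I.epoch_bound[OF a])
  finally show ?thesis unfolding S_def .
qed

theorem corollary7: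
  fixes K T :: nat and l :: "nat \<Rightarrow> nat \<Rightarrow> real" and d :: "nat \<Rightarrow> nat"
  assumes "K \<ge> 2" and "T \<ge> 1"
    and "\<And>t a. t \<in> {1..T} \<Longrightarrow> a \<in> {1..K} \<Longrightarrow> 0 \<le> l t a \<and> l t a \<le> 1"
  shows "expected_regret K T l d
    \<le> 30 * sqrt ((real K * real T * exp 1 / 2 + (1 + 4 * exp 1) * real (\<Sum>t=1..T. d t)) * ln (real K))
       + 10 * (exp 1)\<^sup>2 * real K * ln (real K) + 5"
proof -
  note K2 = assms(1) and T1 = assms(2) and lb = assms(3)
  have K1: "K \<ge> 1" using K2 by simp
  define X where "X = (real K * real T * exp 1 / 2 + (1 + 4 * exp 1) * real (\<Sum>t=1..T. d t)) * ln (real K)"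
  have "Min ((\<lambda>a. \<Sum>t=1..T. l t a) ` {1..K}) \<in> (\<lambda>a. \<Sum>t=1..T. l t a) ` {1..K}"
    using K1 by (intro Min_in) auto
  then obtain a where a: "a \<in> {1..K}" and amin: "Min ((\<lambda>a. \<Sum>t=1..T. l t a) ` {1..K}) = (\<Sum>t=1..T. l t a)"
    by auto
  define g where "g t = E K l d T (\<lambda>hs. l t (hs ! (t - 1))) - l t a" for t
  have HT: "{hs. length hs = T \<and> set hs \<subseteq> {1..K}} = H K T" unfolding H_def ..
  have reg: "expected_regret K T l d = (\<Sum>t\<in>{1..T}. g t)"
  proof -
    have "expected_regret K T l d = E K l d T (\<lambda>hs. \<Sum>t\<in>{1..T}. l t (hs ! (t - 1))) - (\<Sum>t=1..T. l t a)"
      unfolding expected_regret_def amin HT E_def ..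
    also have "... = (\<Sum>t\<in>{1..T}. E K l d T (\<lambda>hs. l t (hs ! (t - 1)))) - (\<Sum>t=1..T. l t a)"
      by (simp only: E_sum)
    also have "... = (\<Sum>t\<in>{1..T}. g t)" unfolding g_def by (simp add: sum_subtractf)
    finally show ?thesis .
  qed
  define M where "M = fst (epoch K d T)"
  have grp: "(\<Sum>t\<in>{1..T}. g t) = (\<Sum>m\<in>{..M}. \<Sum>t\<in>{t\<in>{1..T}. fst (epoch K d t) = m}. g t)"
  proof (rule sum.group[symmetric])
    show "(\<lambda>t. fst (epoch K d t)) ` {1..T} \<subseteq> {..M}"
      unfolding M_def using epoch_fst_mono[OF K2] by auto
  qed auto
  have "(\<Sum>m\<in>{..M}. \<Sum>t\<in>{t\<in>{1..T}. fst (epoch K d t) = m}. g t) \<le> (\<Sum>m\<in>{..M}. 6 * sqrt (2 ^ m))"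
    unfolding g_def by (intro sum_mono epoch_group[OF K2 lb a]) auto
  also have "... = 6 * (\<Sum>m\<le>M. sqrt (2 ^ m))" by (simp add: sum_distrib_left)
  also have "... \<le> 6 * ((2 + sqrt 2) * sqrt (2 ^ M))" using geom_sqrt by (intro mult_left_mono) auto
  finally have A: "expected_regret K T l d \<le> 6 * ((2 + sqrt 2) * sqrt (2 ^ M))" using reg grp by simp
  have "2 ^ M \<le> 2 * X" unfolding M_def X_def by (rule final_M_bound[OF K2 T1])
  hence "sqrt (2 ^ M) \<le> sqrt (2 * X)" by (rule real_sqrt_le_mono)
  also have "... = sqrt 2 * sqrt X" by (simp add: real_sqrt_mult)
  finally have B: "sqrt (2 ^ M) \<le> sqrt 2 * sqrt X" .
  have s2: "sqrt 2 \<le> (3/2::real)"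
  proof -
    have "sqrt 2 \<le> sqrt ((3/2::real)^2)" by (intro real_sqrt_le_mono) (simp add: power2_eq_square)
    thus ?thesis by simp
  qed
  have X0: "X \<ge> 0" unfolding X_def using K2 by (intro mult_nonneg_nonneg add_nonneg_nonneg) (auto intro: sum_nonneg)
  have sX: "sqrt X \<ge> 0" using X0 by simp
  have "6 * ((2 + sqrt 2) * sqrt (2 ^ M)) \<le> 6 * ((2 + sqrt 2) * (sqrt 2 * sqrt X))"
    using B by (intro mult_left_mono) auto
  also have "... = (12 * sqrt 2 + 12) * sqrt X" by (simp add: algebra_simps)
  also have "... \<le> 30 * sqrt X" using s2 sX by (intro mult_right_mono) auto
  finally have C0: "6 * ((2 + sqrt 2) * sqrt (2 ^ M)) \<le> 30 * sqrt X" .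
  have C: "expected_regret K T l d \<le> 30 * sqrt X" using A C0 by linarith
  have D: "0 \<le> 10 * (exp 1)\<^sup>2 * real K * ln (real K)" using K1 by simp
  show ?thesis using C D unfolding X_def by linarith
qed


end
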